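(* Let $0<\alpha<1$ and let $p:\mathbb{R}\to\mathbb{R}$ be Lipschitz-continuous with $p_2\le p(t)\le p_1<0$ for all $t\in\mathbb{R}$, for some constants $p_2\le p_1<0$. For every $n\in\mathbb{N}$ there exists $\gamma_n>0$ such that, for all real $t_0$ and $v_0>\gamma_n$, the unique bouncing solution $u$ of $\ddot u-\frac{1}{u^\alpha}=p(t)$ with $u(t_0)=0$ and $\dot u(t_0^+)=v_0$, continued forward in time by reflecting the velocity at each collision, has at least $n$ impacts (zeros) with the singularity $u=0$ after $t_0$.
   Context: Let $\eta=((\alpha-1)p_1)^{-1/\alpha}$. For any $s$ and any $w>\sqrt{2(p_1-p_2)\eta}$ there is a unique maximal solution of the equation on an interval $(s,s')$, $s'<\infty$, with $u(t)\to0$ as $t\to s^+$ and $t\to s'^-$, $\dot u(s^+)=w$ and finite $\dot u(s'^-)<0$. A bouncing solution is a continuous function $u\ge0$ such that its zero set $Z$ is discrete, $u$ is $C^2$ and solves the equation on each open interval disjoint from $Z$, and at each $t_*\in Z$ the one-sided limits $\dot u(t_*^\pm)$ exist with $\dot u(t_*^+)=-\dot u(t_*^-)$ (elastic collision). The forward continuation from $(t_0,v_0)$ concatenates such maximal solutions, restarting at each collision time $t_*$ with velocity $-\dot u(t_*^-)$, as long as this velocity exceeds $\sqrt{2(p_1-p_2)\eta}$. *)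

theory Defs
  imports "HOL-Analysis.Analysis"
begin

definition eta :: "real \<Rightarrow> real \<Rightarrow> real" where
  "eta \<alpha> p1 = ((\<alpha> - 1) * p1) powr (- 1 / \<alpha>)"

definition vel_threshold :: "real \<Rightarrow> real \<Rightarrow> real \<Rightarrow> real" where
  "vel_threshold \<alpha> p1 p2 = sqrt (2 * (p1 - p2) * eta \<alpha> p1)"

definition solves_on :: "real \<Rightarrow> (real \<Rightarrow> real) \<Rightarrow> (real \<Rightarrow> real) \<Rightarrow> (real \<Rightarrow> real) \<Rightarrow> real \<Rightarrow> real \<Rightarrow> bool" where
  "solves_on \<alpha> p u du a b \<longleftrightarrow>
     (\<forall>s\<in>{a<..<b}. u s > 0 \<and> (u has_real_derivative du s) (at s) \<and>
        (du has_real_derivative (p s + 1 / (u s powr \<alpha>))) (at s))"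

text \<open>The forward continuation (bouncing solution) starting at time t0 with u(t0) = 0,
  du(t0+) = v0, performs (at least) n impacts: there are collision times
  t0 = t 0 < t 1 < ... < t n, on each (t k, t (k+1)) u is a positive solution,
  u vanishes at each t k, the one-sided velocity limits exist, the impacts are
  elastic, and each restart velocity exceeds the threshold (so that the
  continuation goes on).\<close>
definition bounces_n_times ::
  "real \<Rightarrow> real \<Rightarrow> real \<Rightarrow> (real \<Rightarrow> real) \<Rightarrow> real \<Rightarrow> real \<Rightarrow> nat
    \<Rightarrow> (real \<Rightarrow> real) \<Rightarrow> (real \<Rightarrow> real) \<Rightarrow> (nat \<Rightarrow> real) \<Rightarrow> bool" where
  "bounces_n_times \<alpha> p1 p2 p t0 v0 n u du t \<longleftrightarrow>
     t 0 = t0 \<and>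
     (\<forall>k<n. t k < t (Suc k)) \<and>
     continuous_on {t 0..t n} u \<and>
     (\<forall>k\<le>n. u (t k) = 0) \<and>
     (\<forall>k<n. solves_on \<alpha> p u du (t k) (t (Suc k))) \<and>
     (du \<longlongrightarrow> v0) (at_right (t 0)) \<and>
     (\<forall>k\<in>{1..n}. \<exists>w. w < 0 \<and> (du \<longlongrightarrow> w) (at_left (t k)) \<and>
        (k < n \<longrightarrow> (du \<longlongrightarrow> - w) (at_right (t k)) \<and> - w > vel_threshold \<alpha> p1 p2))"

end

theory Submission
  imports Defs "HOL-Analysis.Analysis"
begin

fun pic :: "('a::banach \<Rightarrow> 'a) \<Rightarrow> 'a \<Rightarrow> nat \<Rightarrow> real \<Rightarrow> 'a" where
  "pic F x0 0 s = x0"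
| "pic F x0 (Suc n) s = x0 + integral {0..s} (\<lambda>r. F (pic F x0 n r))"

locale picard =
  fixes F :: "'a::banach \<Rightarrow> 'a" and x0 :: 'a and L :: real
  assumes L0: "L \<ge> 0" and lip: "\<And>x y. norm (F x - F y) \<le> L * norm (x - y)"
begin

lemma contF: "continuous_on UNIV F"
proof -
  have "L-lipschitz_on UNIV F"
    by (rule lipschitz_onI) (auto simp: dist_norm lip L0)
  thus ?thesis by (rule lipschitz_on_continuous_on)
qed

lemma pic_cont: "continuous_on {0..S} (pic F x0 n)"
proof (induction n)
  case 0 then show ?case by simp
next
  case (Suc n)
  have c: "continuous_on {0..S} (\<lambda>r. F (pic F x0 n r))"
    by (rule continuous_on_compose2[OF contF Suc]) auto
  show ?case
    by (simp only: pic.simps) (intro continuous_on_add continuous_on_const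
        indefinite_integral_continuous_1 integrable_continuous_real c)
qed

lemma pic_int: "(\<lambda>r. F (pic F x0 n r)) integrable_on {0..s}"
  by (intro integrable_continuous_real continuous_on_compose2[OF contF pic_cont]) auto

lemma pic_bound:
  assumes "s \<in> {0..S}"
  shows "norm (pic F x0 (Suc n) s - pic F x0 n s) \<le> (S * norm (F x0)) * (L * s) ^ n / fact n"
  using assms
proof (induction n arbitrary: s)
  case 0
  then show ?case by (simp add: mult_right_mono)
next
  case (Suc n)
  define B where "B = S * norm (F x0)"
  have eq: "pic F x0 (Suc (Suc n)) s - pic F x0 (Suc n) s
      = integral {0..s} (\<lambda>r. F (pic F x0 (Suc n) r) - F (pic F x0 n r))"
    by (simp add: integral_diff pic_int del: pic.simps(2)) (simp)
  have hi: "((\<lambda>r. L * (B * (L * r) ^ n / fact n)) has_integral (B*(L * s) ^ (Suc n)/fact (Suc n) - B*(L * 0) ^ (Suc n)/fact (Suc n))) {0..s}"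
  proof (rule fundamental_theorem_of_calculus)
    show "0 \<le> s" using Suc by auto
    fix r assume "r \<in> {0..s}"
    have d: "((\<lambda>r. (B*L^(Suc n)/fact (Suc n)) * r ^ (Suc n)) has_real_derivative
        (B*L^(Suc n)/fact (Suc n)) * (real (Suc n) * r ^ n)) (at r within {0..s})"
      using DERIV_pow[of "Suc n" r "{0..s}"] by (intro DERIV_cmult) simp
    have e1: "(B*L^(Suc n)/fact (Suc n)) * (real (Suc n) * r ^ n) = L * (B * (L * r) ^ n / fact n)"
      by (simp add: fact_Suc power_mult_distrib field_simps del: of_nat_Suc)
    have e2: "(\<lambda>r. (B*L^(Suc n)/fact (Suc n)) * r ^ (Suc n)) = (\<lambda>r. B*(L * r) ^ (Suc n)/fact (Suc n))"
      by (auto simp: power_mult_distrib)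
    show "((\<lambda>r. B*(L * r) ^ (Suc n)/fact (Suc n)) has_vector_derivative L * (B * (L * r) ^ n / fact n)) (at r within {0..s})"
      using d unfolding e1 e2 has_real_derivative_iff_has_vector_derivative .
  qed
  have "norm (integral {0..s} (\<lambda>r. F (pic F x0 (Suc n) r) - F (pic F x0 n r)))
      \<le> integral {0..s} (\<lambda>r. L * (B * (L * r) ^ n / fact n))"
  proof (rule integral_norm_bound_integral)
    show "(\<lambda>r. F (pic F x0 (Suc n) r) - F (pic F x0 n r)) integrable_on {0..s}"
      by (intro integrable_diff pic_int)
    show "(\<lambda>r. L * (B * (L * r) ^ n / fact n)) integrable_on {0..s}"
      using hi by blast
    fix r assume r: "r \<in> {0..s}"
    have "norm (F (pic F x0 (Suc n) r) - F (pic F x0 n r)) \<le> L * norm (pic F x0 (Suc n) r - pic F x0 n r)"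
      by (rule lip)
    also have "\<dots> \<le> L * (B * (L * r) ^ n / fact n)"
    proof (rule mult_left_mono[OF _ L0])
      show "norm (pic F x0 (Suc n) r - pic F x0 n r) \<le> B * (L * r) ^ n / fact n"
        using Suc.IH[of r] r Suc.prems by (simp only: B_def) auto
    qed
    finally show "norm (F (pic F x0 (Suc n) r) - F (pic F x0 n r)) \<le> L * (B * (L * r) ^ n / fact n)" .
  qed
  also have "\<dots> = B*(L * s) ^ (Suc n)/fact (Suc n)"
    using integral_unique[OF hi] by simp
  finally show ?case using eq by (simp add: B_def)
qed


lemma pic_unif:
  assumes S: "S \<ge> 0"
  shows "uniform_limit {0..S} (pic F x0) (\<lambda>s. lim (\<lambda>n. pic F x0 n s)) sequentially"
proof -
  define B where "B = S * norm (F x0)"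
  have B0: "B \<ge> 0" using S by (simp add: B_def)
  define M where "M = (\<lambda>i. B * (L*S)^i / fact i)"
  have "summable (\<lambda>i. B * (inverse (fact i) * (L*S)^i))"
    by (intro summable_mult summable_exp)
  moreover have "(\<lambda>i. B * (inverse (fact i) * (L*S)^i)) = M"
    by (auto simp: M_def divide_inverse)
  ultimately have sM: "summable M" by simp
  have "uniformly_convergent_on {0..S} (\<lambda>n s. \<Sum>i<n. pic F x0 (Suc i) s - pic F x0 i s)"
  proof (rule Weierstrass_m_test'[OF _ sM])
    fix i s assume s: "s \<in> {0..S}"
    have "norm (pic F x0 (Suc i) s - pic F x0 i s) \<le> B * (L * s) ^ i / fact i"
      using pic_bound[OF s] by (simp add: B_def)
    also have "\<dots> \<le> M i"
      unfolding M_def using s B0 L0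
      by (intro divide_right_mono mult_left_mono power_mono mult_left_mono) auto
    finally show "norm (pic F x0 (Suc i) s - pic F x0 i s) \<le> M i" .
  qed
  then obtain l where l: "uniform_limit {0..S} (\<lambda>n s. \<Sum>i<n. pic F x0 (Suc i) s - pic F x0 i s) l sequentially"
    unfolding uniformly_convergent_on_def by blast
  have "uniform_limit {0..S} (\<lambda>n s. x0 + (\<Sum>i<n. pic F x0 (Suc i) s - pic F x0 i s)) (\<lambda>s. x0 + l s) sequentially"
    by (intro uniform_limit_add uniform_limit_const l)
  moreover have "(\<lambda>n s. x0 + (\<Sum>i<n. pic F x0 (Suc i) s - pic F x0 i s)) = pic F x0"
    by (auto simp: sum_lessThan_telescope[of "\<lambda>i. pic F x0 i _"] simp del: pic.simps(2))
  ultimately have "uniformly_convergent_on {0..S} (pic F x0)"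
    unfolding uniformly_convergent_on_def by auto
  thus ?thesis by (simp add: uniformly_convergent_uniform_limit_iff)
qed

definition "sol = (\<lambda>s. lim (\<lambda>n. pic F x0 n s))"

lemma sol_cont: "continuous_on {0..S} sol"
proof (cases "S \<ge> 0")
  case True
  show ?thesis unfolding sol_def
    by (rule uniform_limit_theorem[OF always_eventually pic_unif[OF True]]) (auto intro: pic_cont)
next
  case False
  then have "{0..S} = {}" by auto
  then show ?thesis by simp
qed

lemma sol_lim: "s \<ge> 0 \<Longrightarrow> (\<lambda>n. pic F x0 n s) \<longlonglongrightarrow> sol s"
  unfolding sol_def by (rule tendsto_uniform_limitI[OF pic_unif]) auto

lemma sol0: "sol 0 = x0"
proof -
  have "\<And>n. pic F x0 n 0 = x0" by (case_tac n) auto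
  then have "(\<lambda>n. pic F x0 n 0) \<longlonglongrightarrow> x0" by simp
  thus ?thesis using sol_lim[of 0] LIMSEQ_unique by auto
qed

lemma sol_int:
  assumes s: "s \<ge> 0"
  shows "sol s = x0 + integral {0..s} (\<lambda>r. F (sol r))"
proof -
  have u: "uniform_limit {0..s} (pic F x0) sol sequentially"
    using pic_unif[OF s] unfolding sol_def .
  have uF: "uniform_limit {0..s} (\<lambda>n r. F (pic F x0 n r)) (\<lambda>r. F (sol r)) sequentially"
  proof (rule uniform_limitI)
    fix e :: real assume e: "e > 0"
    have "e / (L+1) > 0" using e L0 by simp
    from uniform_limitD[OF u this]
    show "\<forall>\<^sub>F n in sequentially. \<forall>r\<in>{0..s}. dist (F (pic F x0 n r)) (F (sol r)) < e"
    proof eventually_elim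
      case (elim n)
      show ?case
      proof
        fix r assume r: "r \<in> {0..s}"
        have "dist (F (pic F x0 n r)) (F (sol r)) \<le> L * dist (pic F x0 n r) (sol r)"
          using lip by (simp add: dist_norm)
        also have "\<dots> \<le> L * (e / (L+1))"
          using elim r L0 by (intro mult_left_mono) (auto intro: less_imp_le)
        also have "\<dots> < e" using e L0 by (simp add: field_simps)
        finally show "dist (F (pic F x0 n r)) (F (sol r)) < e" .
      qed
    qed
  qed
  obtain I J where I: "\<And>n. ((\<lambda>r. F (pic F x0 n r)) has_integral I n) {0..s}"
    and J: "((\<lambda>r. F (sol r)) has_integral J) {0..s}" and IJ: "I \<longlonglongrightarrow> J"
    by (rule uniform_limit_integral[OF uF]) (auto intro: continuous_on_compose2[OF contF pic_cont])
  have "(\<lambda>n. pic F x0 (Suc n) s) \<longlonglongrightarrow> x0 + J"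
  proof -
    have "\<And>n. integral {0..s} (\<lambda>r. F (pic F x0 n r)) = I n" using I integral_unique by blast
    then show ?thesis using tendsto_add[OF tendsto_const IJ, of x0] by simp
  qed
  moreover have "(\<lambda>n. pic F x0 (Suc n) s) \<longlonglongrightarrow> sol s"
    using sol_lim[OF s] by (rule LIMSEQ_Suc)
  ultimately have "sol s = x0 + J" using LIMSEQ_unique by blast
  thus ?thesis using J by (simp add: integral_unique)
qed

lemma sol_deriv:
  assumes t: "t > 0"
  shows "(sol has_vector_derivative F (sol t)) (at t)"
proof -
  define S where "S = t + 1"
  have c: "continuous_on {0..S} (\<lambda>r. F (sol r))"
    by (rule continuous_on_compose2[OF contF sol_cont]) auto
  have "((\<lambda>u. integral {0..u} (\<lambda>r. F (sol r))) has_vector_derivative F (sol t)) (at t within {0..S})"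
    using integral_has_vector_derivative[OF c, of t] t by (simp add: S_def)
  then have hd: "((\<lambda>u. integral {0..u} (\<lambda>r. F (sol r))) has_vector_derivative F (sol t)) (at t)"
    using t by (simp add: S_def at_within_Icc_at)
  then have "((\<lambda>u. x0 + integral {0..u} (\<lambda>r. F (sol r))) has_vector_derivative F (sol t)) (at t)"
    using has_vector_derivative_add[OF has_vector_derivative_const[of x0] hd] by simp
  then show ?thesis
    by (rule has_vector_derivative_transform_within_open[of _ _ _ "{0<..}"])
       (use t sol_int in auto)
qed

end

lemma picard_exists:
  fixes F :: "'a::banach \<Rightarrow> 'a"
  assumes "L \<ge> 0" "\<And>x y. norm (F x - F y) \<le> L * norm (x - y)"
  shows "\<exists>x. x 0 = x0 \<and> (\<forall>S. continuous_on {0..S} x) \<and> (\<forall>t>0. (x has_vector_derivative F (x t)) (at t))"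
proof -
  interpret picard F x0 L using assms by unfold_locales auto
  show ?thesis using sol0 sol_cont sol_deriv by blast
qed

lemma first_hit:
  fixes f :: "real \<Rightarrow> real"
  assumes ab: "a \<le> b" and cf: "continuous_on {a..b} f" and fa: "f a < c" and fb: "c \<le> f b"
  shows "\<exists>\<tau>. a < \<tau> \<and> \<tau> \<le> b \<and> f \<tau> = c \<and> (\<forall>s. a \<le> s \<and> s < \<tau> \<longrightarrow> f s < c)"
proof -
  define K where "K = {s \<in> {a..b}. (\<lambda>_. c) s \<le> f s}"
  have cK: "closed K" unfolding K_def
    by (rule continuous_on_closed_Collect_le) (auto intro: cf continuous_on_const)
  have "b \<in> K" using ab fb by (auto simp: K_def)
  then have ne: "K \<noteq> {}" by auto
  have bb: "bdd_below K" by (rule bdd_belowI[of _ a]) (auto simp: K_def)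
  define \<tau> where "\<tau> = Inf K"
  have tK: "\<tau> \<in> K" unfolding \<tau>_def by (rule closed_contains_Inf[OF ne bb cK])
  have below: "f s < c" if "a \<le> s" "s < \<tau>" for s
  proof (rule ccontr)
    assume "\<not> f s < c"
    then have "s \<in> K" using that tK by (auto simp: K_def)
    then have "\<tau> \<le> s" unfolding \<tau>_def using bb by (rule cInf_lower)
    with that show False by simp
  qed
  have ta: "a \<le> \<tau>" "\<tau> \<le> b" "c \<le> f \<tau>" using tK by (auto simp: K_def)
  have "\<exists>x. a \<le> x \<and> x \<le> \<tau> \<and> f x = c"
    by (rule IVT') (use fa ta in \<open>auto intro: continuous_on_subset[OF cf]\<close>)
  then obtain x where x: "a \<le> x" "x \<le> \<tau>" "f x = c" by blast
  have "x = \<tau>" using below[of x] x by force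
  then have ft: "f \<tau> = c" using x by simp
  have "a \<noteq> \<tau>" using ft fa by auto
  then show ?thesis using ta ft below by (intro exI[of _ \<tau>]) auto
qed

lemma first_hit_down:
  fixes f :: "real \<Rightarrow> real"
  assumes ab: "a \<le> b" and cf: "continuous_on {a..b} f" and fa: "f a > c" and fb: "c \<ge> f b"
  shows "\<exists>\<tau>. a < \<tau> \<and> \<tau> \<le> b \<and> f \<tau> = c \<and> (\<forall>s. a \<le> s \<and> s < \<tau> \<longrightarrow> f s > c)"
proof -
  have "\<exists>\<tau>. a < \<tau> \<and> \<tau> \<le> b \<and> - f \<tau> = - c \<and> (\<forall>s. a \<le> s \<and> s < \<tau> \<longrightarrow> - f s < - c)"
    by (rule first_hit) (use assms in \<open>auto intro: continuous_intros\<close>)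
  then show ?thesis by auto
qed

lemma deriv_lower:
  fixes f f' :: "real \<Rightarrow> real"
  assumes ab: "a \<le> b" and cf: "continuous_on {a..b} f"
    and d: "\<And>x. a < x \<Longrightarrow> x < b \<Longrightarrow> (f has_real_derivative f' x) (at x)"
    and m: "\<And>x. a < x \<Longrightarrow> x < b \<Longrightarrow> f' x \<ge> m"
  shows "f b - f a \<ge> m * (b - a)"
proof -
  have "(\<lambda>x. f x - m * x) a \<le> (\<lambda>x. f x - m * x) b"
  proof (rule DERIV_nonneg_imp_increasing_open[OF ab])
    fix x assume x: "a < x" "x < b"
    show "\<exists>y. ((\<lambda>x. f x - m * x) has_real_derivative y) (at x) \<and> 0 \<le> y"
      using d[OF x] m[OF x] by (intro exI[of _ "f' x - m"]) (auto intro!: derivative_eq_intros)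
  qed (intro continuous_intros cf)
  then show ?thesis by (simp add: algebra_simps)
qed

lemma deriv_upper:
  fixes f f' :: "real \<Rightarrow> real"
  assumes ab: "a \<le> b" and cf: "continuous_on {a..b} f"
    and d: "\<And>x. a < x \<Longrightarrow> x < b \<Longrightarrow> (f has_real_derivative f' x) (at x)"
    and m: "\<And>x. a < x \<Longrightarrow> x < b \<Longrightarrow> f' x \<le> m"
  shows "f b - f a \<le> m * (b - a)"
proof -
  have "(- f) b - (- f) a \<ge> (- m) * (b - a)"
    by (rule deriv_lower[OF ab, of _ "\<lambda>x. - f' x"]) (use assms in \<open>auto intro!: derivative_eq_intros continuous_intros\<close>)
  then show ?thesis by simp
qed

lemma vd_fst: "(f has_vector_derivative D) F \<Longrightarrow> ((\<lambda>x. fst (f x)) has_real_derivative fst D) F"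
  unfolding has_real_derivative_iff_has_vector_derivative has_vector_derivative_def
  by (drule has_derivative_fst) simp

lemma vd_snd: "(f has_vector_derivative D) F \<Longrightarrow> ((\<lambda>x. snd (f x)) has_vector_derivative snd D) F"
  unfolding has_vector_derivative_def
  by (drule has_derivative_snd) simp

lemma powr_lip:
  fixes x y Z e :: real
  assumes e: "1 \<le> e" and x: "0 \<le> x" "x \<le> Z" and y: "0 \<le> y" "y \<le> Z"
  shows "\<bar>x powr e - y powr e\<bar> \<le> e * Z powr (e - 1) * \<bar>x - y\<bar>"
proof -
  have main: "\<bar>x powr e - y powr e\<bar> \<le> e * Z powr (e - 1) * \<bar>x - y\<bar>"
    if yx: "y < x" and x: "0 \<le> x" "x \<le> Z" and y: "0 \<le> y" "y \<le> Z" for x y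
  proof -
    have "\<exists>l z. y < z \<and> z < x \<and> ((\<lambda>s. s powr e) has_real_derivative l) (at z) \<and> x powr e - y powr e = (x - y) * l"
    proof (rule MVT[OF yx])
      show "continuous_on {y..x} (\<lambda>s. s powr e)"
        using e y by (intro continuous_on_powr' continuous_on_id continuous_on_const) auto
      fix s assume "y < s" "s < x"
      then have "s > 0" using y by simp
      then show "(\<lambda>s. s powr e) differentiable (at s)"
        using has_real_derivative_powr[of s e] real_differentiable_def by blast
    qed
    then obtain l s where s: "y < s" "s < x" and d: "((\<lambda>s. s powr e) has_real_derivative l) (at s)"
      and eq: "x powr e - y powr e = (x - y) * l" by blast
    have sp: "s > 0" using s y by simp
    have l: "l = e * s powr (e - 1)"
      using DERIV_unique[OF d has_real_derivative_powr[OF sp]] .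
    have "0 \<le> l" using l e by simp
    moreover have "l \<le> e * Z powr (e - 1)"
      unfolding l using e sp s x by (intro mult_left_mono powr_mono2) auto
    ultimately show ?thesis using eq yx by (simp add: abs_mult mult.commute mult_left_mono)
  qed
  show ?thesis
  proof (cases x y rule: linorder_cases)
    case less
    then show ?thesis using main[of x y] x y by (simp add: abs_minus_commute)
  next
    case greater
    then show ?thesis using main[of y x] x y by simp
  qed simp
qed

definition clp :: "real \<Rightarrow> real \<Rightarrow> real" where "clp Zc z = max 0 (min Zc z)"

definition vf :: "real \<Rightarrow> (real \<Rightarrow> real) \<Rightarrow> real \<Rightarrow> real \<times> real \<times> real \<Rightarrow> real \<times> real \<times> real" where
  "vf k p Zc X = (clp Zc (fst (snd X)) powr (k - 1), snd (snd X) / k,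
      clp Zc (fst (snd X)) powr (k - 1) * p (fst X) + (clp Zc (fst (snd X)))^2)"

lemma clp_lip: "\<bar>clp Zc a - clp Zc b\<bar> \<le> \<bar>a - b\<bar>"
  unfolding clp_def by (auto simp: max_def min_def)

lemma clp_range: "0 \<le> Zc \<Longrightarrow> 0 \<le> clp Zc a \<and> clp Zc a \<le> Zc"
  unfolding clp_def by auto

lemma vf_lip:
  fixes p :: "real \<Rightarrow> real"
  assumes Zc: "0 \<le> Zc" and k: "2 \<le> k" and pb: "\<And>t. \<bar>p t\<bar> \<le> Bp" and Lp: "\<And>s t. \<bar>p s - p t\<bar> \<le> Lp * \<bar>s - t\<bar>"
    and Lp0: "0 \<le> Lp"
  shows "\<exists>L\<ge>0. \<forall>x y. norm (vf k p Zc x - vf k p Zc y) \<le> L * norm (x - y)"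
proof -
  define \<Lambda> where "\<Lambda> = (k - 1) * Zc powr (k - 1 - 1)"
  have \<Lambda>0: "\<Lambda> \<ge> 0" using k by (simp add: \<Lambda>_def)
  have Bp0: "Bp \<ge> 0" using pb[of 0] by simp
  define L where "L = \<Lambda> + 1 / k + \<Lambda> * Bp + Zc powr (k - 1) * Lp + 2 * Zc"
  have L0: "L \<ge> 0" using \<Lambda>0 Bp0 k Zc Lp0 by (simp add: L_def)
  show ?thesis
  proof (intro exI[of _ L] conjI allI L0)
    fix x y :: "real \<times> real \<times> real"
    obtain t1 z1 w1 where x: "x = (t1, z1, w1)" by (cases x) auto
    obtain t2 z2 w2 where y: "y = (t2, z2, w2)" by (cases y) auto
    define c1 where "c1 = clp Zc z1"
    define c2 where "c2 = clp Zc z2"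
    have c1r: "0 \<le> c1" "c1 \<le> Zc" using clp_range[OF Zc] by (auto simp: c1_def)
    have c2r: "0 \<le> c2" "c2 \<le> Zc" using clp_range[OF Zc] by (auto simp: c2_def)
    have dc: "\<bar>c1 - c2\<bar> \<le> \<bar>z1 - z2\<bar>" unfolding c1_def c2_def by (rule clp_lip)
    have nx: "\<bar>t1 - t2\<bar> \<le> norm (x - y)" "\<bar>z1 - z2\<bar> \<le> norm (x - y)" "\<bar>w1 - w2\<bar> \<le> norm (x - y)"
    proof -
      have "x - y = (t1 - t2, z1 - z2, w1 - w2)" by (simp add: x y)
      moreover have "norm (t1 - t2) \<le> norm (t1 - t2, z1 - z2, w1 - w2)" by (rule norm_fst_le)
      moreover have "norm (z1 - z2) \<le> norm (z1 - z2, w1 - w2)" by (rule norm_fst_le)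
      moreover have "norm (w1 - w2) \<le> norm (z1 - z2, w1 - w2)" by (rule norm_snd_le)
      moreover have "norm (z1 - z2, w1 - w2) \<le> norm (t1 - t2, z1 - z2, w1 - w2)" by (rule norm_snd_le)
      ultimately show "\<bar>t1 - t2\<bar> \<le> norm (x - y)" "\<bar>z1 - z2\<bar> \<le> norm (x - y)" "\<bar>w1 - w2\<bar> \<le> norm (x - y)"
        by auto
    qed
    have pe: "\<bar>c1 powr (k-1) - c2 powr (k-1)\<bar> \<le> \<Lambda> * \<bar>z1 - z2\<bar>"
    proof -
      have "\<bar>c1 powr (k-1) - c2 powr (k-1)\<bar> \<le> (k-1) * Zc powr (k - 1 - 1) * \<bar>c1 - c2\<bar>"
        using k c1r c2r by (intro powr_lip) auto
      also have "\<dots> \<le> \<Lambda> * \<bar>z1 - z2\<bar>" unfolding \<Lambda>_def using \<Lambda>0 dc by (intro mult_left_mono) (auto simp: \<Lambda>_def)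
      finally show ?thesis .
    qed
    have A: "\<bar>c1 powr (k-1) - c2 powr (k-1)\<bar> \<le> \<Lambda> * norm (x - y)"
      using pe nx \<Lambda>0 by (meson mult_left_mono order_trans)
    have B: "\<bar>w1 / k - w2 / k\<bar> \<le> 1 / k * norm (x - y)"
    proof -
      have "\<bar>w1 / k - w2 / k\<bar> = \<bar>w1 - w2\<bar> / k" using k by (simp add: diff_divide_distrib[symmetric] abs_divide)
      also have "\<dots> \<le> norm (x - y) / k" using nx k by (simp add: divide_right_mono)
      finally show ?thesis by simp
    qed
    have C: "\<bar>(c1 powr (k-1) * p t1 + c1^2) - (c2 powr (k-1) * p t2 + c2^2)\<bar>
        \<le> (\<Lambda> * Bp + Zc powr (k - 1) * Lp + 2 * Zc) * norm (x - y)"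
    proof -
      have e1: "(c1 powr (k-1) * p t1 + c1^2) - (c2 powr (k-1) * p t2 + c2^2)
          = (c1 powr (k-1) - c2 powr (k-1)) * p t1 + c2 powr (k-1) * (p t1 - p t2) + (c1 + c2) * (c1 - c2)"
        by (simp add: algebra_simps power2_eq_square)
      have b1: "\<bar>(c1 powr (k-1) - c2 powr (k-1)) * p t1\<bar> \<le> \<Lambda> * norm (x - y) * Bp"
        unfolding abs_mult using A pb[of t1] by (intro mult_mono) auto
      have b2: "\<bar>c2 powr (k-1) * (p t1 - p t2)\<bar> \<le> Zc powr (k-1) * (Lp * norm (x - y))"
      proof -
        have "c2 powr (k-1) \<le> Zc powr (k-1)" using c2r k by (intro powr_mono2) auto
        moreover have "\<bar>p t1 - p t2\<bar> \<le> Lp * norm (x - y)"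
          using Lp[of t1 t2] nx Lp0 by (meson mult_left_mono order_trans)
        ultimately show ?thesis unfolding abs_mult using c2r by (intro mult_mono) auto
      qed
      have b3: "\<bar>(c1 + c2) * (c1 - c2)\<bar> \<le> (2 * Zc) * norm (x - y)"
        unfolding abs_mult using c1r c2r dc nx by (intro mult_mono) auto
      show ?thesis unfolding e1 using b1 b2 b3 by (simp add: algebra_simps)
    qed
    have "norm (vf k p Zc x - vf k p Zc y)
        \<le> \<bar>c1 powr (k-1) - c2 powr (k-1)\<bar> + (\<bar>w1 / k - w2 / k\<bar>
          + \<bar>(c1 powr (k-1) * p t1 + c1^2) - (c2 powr (k-1) * p t2 + c2^2)\<bar>)"
    proof -
      have "vf k p Zc x - vf k p Zc y = (c1 powr (k-1) - c2 powr (k-1), w1 / k - w2 / k,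
          (c1 powr (k-1) * p t1 + c1^2) - (c2 powr (k-1) * p t2 + c2^2))"
        by (simp add: vf_def x y c1_def c2_def)
      moreover have "norm (c1 powr (k-1) - c2 powr (k-1), w1 / k - w2 / k,
          (c1 powr (k-1) * p t1 + c1^2) - (c2 powr (k-1) * p t2 + c2^2))
          \<le> norm (c1 powr (k-1) - c2 powr (k-1)) + norm (w1 / k - w2 / k,
          (c1 powr (k-1) * p t1 + c1^2) - (c2 powr (k-1) * p t2 + c2^2))" by (rule norm_Pair_le)
      moreover have "norm (w1 / k - w2 / k,
          (c1 powr (k-1) * p t1 + c1^2) - (c2 powr (k-1) * p t2 + c2^2))
          \<le> norm (w1 / k - w2 / k) + norm ((c1 powr (k-1) * p t1 + c1^2) - (c2 powr (k-1) * p t2 + c2^2))"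
        by (rule norm_Pair_le)
      ultimately show ?thesis by (simp only: real_norm_def)
    qed
    also have "\<dots> \<le> L * norm (x - y)"
      using A B C by (simp add: L_def algebra_simps)
    finally show "norm (vf k p Zc x - vf k p Zc y) \<le> L * norm (x - y)" .
  qed
qed

lemma convert_flight:
  fixes T Z W p :: "real \<Rightarrow> real" and \<alpha> k \<tau>b :: real
  assumes a0: "0 < \<alpha>" and a1: "\<alpha> < 1" and kdef: "k * (1 - \<alpha>) = 3"
    and tb0: "0 < \<tau>b"
    and cT: "continuous_on {0..\<tau>b} T" and cZ: "continuous_on {0..\<tau>b} Z" and cW: "continuous_on {0..\<tau>b} W"
    and dT: "\<And>\<tau>. 0 < \<tau> \<Longrightarrow> \<tau> < \<tau>b \<Longrightarrow> (T has_real_derivative Z \<tau> powr (k-1)) (at \<tau>)"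
    and dZ: "\<And>\<tau>. 0 < \<tau> \<Longrightarrow> \<tau> < \<tau>b \<Longrightarrow> (Z has_real_derivative W \<tau> / k) (at \<tau>)"
    and dW: "\<And>\<tau>. 0 < \<tau> \<Longrightarrow> \<tau> < \<tau>b \<Longrightarrow> (W has_real_derivative Z \<tau> powr (k-1) * p (T \<tau>) + (Z \<tau>)^2) (at \<tau>)"
    and Zpos: "\<And>\<tau>. 0 < \<tau> \<Longrightarrow> \<tau> < \<tau>b \<Longrightarrow> Z \<tau> > 0"
    and Z0: "Z 0 = 0" and Zb: "Z \<tau>b = 0"
  shows "\<exists>tb u du. T 0 < tb \<and> continuous_on {T 0..tb} u \<and> u (T 0) = 0 \<and> u tb = 0 \<and>
           solves_on \<alpha> p u du (T 0) tb \<and> (du \<longlongrightarrow> W 0) (at_right (T 0)) \<and>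
           (du \<longlongrightarrow> W \<tau>b) (at_left tb)"
proof -
  have k3: "k > 3"
  proof -
    have "k = 3 / (1 - \<alpha>)" using kdef a1 by (simp add: field_simps)
    moreover have "3 / (1 - \<alpha>) > 3" using a0 a1 by (simp add: field_simps)
    ultimately show ?thesis by simp
  qed
  define ta where "ta = T 0"
  define tb where "tb = T \<tau>b"
  have Zge: "Z \<tau> \<ge> 0" if "\<tau> \<in> {0..\<tau>b}" for \<tau>
    using that Zpos[of \<tau>] Z0 Zb by (cases "\<tau> = 0 \<or> \<tau> = \<tau>b") (auto simp: less_eq_real_def)
  have mono: "T x < T y" if "0 \<le> x" "x < y" "y \<le> \<tau>b" for x y
  proof (rule DERIV_pos_imp_increasing_open[OF that(2)])
    fix s assume "x < s" "s < y"
    then show "\<exists>d. (T has_real_derivative d) (at s) \<and> d > 0"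
      using that Zpos[of s] by (intro exI[of _ "Z s powr (k-1)"]) (auto intro: dT)
  qed (rule continuous_on_subset[OF cT], use that in auto)
  have tab: "ta < tb" unfolding ta_def tb_def using mono[of 0 \<tau>b] tb0 by simp
  have inj: "inj_on T {0..\<tau>b}"
    by (rule inj_onI) (metis atLeastAtMost_iff linorder_neqE_linordered_idom mono order_less_irrefl)
  have img: "T ` {0..\<tau>b} = {ta..tb}"
  proof
    show "T ` {0..\<tau>b} \<subseteq> {ta..tb}"
      unfolding ta_def tb_def using mono by (force simp: le_less)
    show "{ta..tb} \<subseteq> T ` {0..\<tau>b}"
    proof
      fix t assume "t \<in> {ta..tb}"
      then have "\<exists>x. 0 \<le> x \<and> x \<le> \<tau>b \<and> T x = t"
        using tb0 by (intro IVT' cT) (auto simp: ta_def tb_def)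
      then show "t \<in> T ` {0..\<tau>b}" by auto
    qed
  qed
  define \<sigma> where "\<sigma> = the_inv_into {0..\<tau>b} T"
  have c\<sigma>: "continuous_on {ta..tb} \<sigma>"
    unfolding \<sigma>_def img[symmetric] by (rule continuous_on_inv_into[OF cT compact_Icc inj])
  have \<sigma>in: "\<sigma> t \<in> {0..\<tau>b}" if "t \<in> {ta..tb}" for t
    unfolding \<sigma>_def using that img by (metis inj the_inv_into_into order_refl)
  have T\<sigma>: "T (\<sigma> t) = t" if "t \<in> {ta..tb}" for t
    unfolding \<sigma>_def using that img by (metis f_the_inv_into_f inj)
  have \<sigma>T: "\<sigma> (T \<tau>) = \<tau>" if "\<tau> \<in> {0..\<tau>b}" for \<tau>
    unfolding \<sigma>_def using that by (metis inj the_inv_into_f_f)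
  have \<sigma>a: "\<sigma> ta = 0" using \<sigma>T[of 0] tb0 by (simp add: ta_def)
  have \<sigma>b: "\<sigma> tb = \<tau>b" using \<sigma>T[of \<tau>b] tb0 by (simp add: tb_def)
  have \<sigma>open: "0 < \<sigma> t \<and> \<sigma> t < \<tau>b" if "ta < t" "t < tb" for t
  proof -
    have "\<sigma> t \<in> {0..\<tau>b}" using that \<sigma>in by auto
    moreover have "\<sigma> t \<noteq> 0" using T\<sigma>[of t] that by (auto simp: ta_def)
    moreover have "\<sigma> t \<noteq> \<tau>b" using T\<sigma>[of t] that by (auto simp: tb_def)
    ultimately show ?thesis by auto
  qed
  have d\<sigma>: "(\<sigma> has_real_derivative inverse (Z (\<sigma> t) powr (k-1))) (at t)" if t: "ta < t" "t < tb" for t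
  proof (rule DERIV_inverse_function[where f = T and a = ta and b = tb])
    show "(T has_real_derivative Z (\<sigma> t) powr (k-1)) (at (\<sigma> t))" using \<sigma>open[OF t] by (auto intro: dT)
    show "Z (\<sigma> t) powr (k-1) \<noteq> 0" using \<sigma>open[OF t] Zpos[of "\<sigma> t"] by auto
    show "\<And>y. ta < y \<Longrightarrow> y < tb \<Longrightarrow> T (\<sigma> y) = y" using T\<sigma> by auto
    show "isCont \<sigma> t"
      by (rule continuous_on_interior[OF c\<sigma>]) (use t in auto)
  qed (use t in auto)
  define u where "u = (\<lambda>t. Z (\<sigma> t) powr k)"
  define du where "du = (\<lambda>t. W (\<sigma> t))"
  have cZ\<sigma>: "continuous_on {ta..tb} (\<lambda>t. Z (\<sigma> t))"
    by (rule continuous_on_compose2[OF cZ c\<sigma>]) (use \<sigma>in in auto)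
  have cu: "continuous_on {ta..tb} u"
    unfolding u_def using k3
    by (intro continuous_on_powr' cZ\<sigma> continuous_on_const) (auto intro: Zge \<sigma>in)
  have cdu: "continuous_on {ta..tb} du"
    unfolding du_def by (rule continuous_on_compose2[OF cW c\<sigma>]) (use \<sigma>in in auto)
  have ua: "u ta = 0" unfolding u_def \<sigma>a Z0 by simp
  have ub: "u tb = 0" unfolding u_def \<sigma>b Zb by simp
  have sol: "solves_on \<alpha> p u du ta tb"
    unfolding solves_on_def
  proof (intro ballI conjI)
    fix s assume "s \<in> {ta<..<tb}"
    then have s: "ta < s" "s < tb" by auto
    define z where "z = Z (\<sigma> s)"
    have zp: "z > 0" unfolding z_def using \<sigma>open[OF s] Zpos[of "\<sigma> s"] by auto
    show "u s > 0" unfolding u_def using zp z_def by simp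
    have dz: "((\<lambda>t. Z (\<sigma> t)) has_real_derivative (W (\<sigma> s) / k) * inverse (z powr (k-1))) (at s)"
      unfolding z_def using \<sigma>open[OF s] by (intro DERIV_chain2[OF dZ d\<sigma>[OF s]]) auto
    have "(u has_real_derivative (k * z powr (k - 1)) * ((W (\<sigma> s) / k) * inverse (z powr (k-1)))) (at s)"
      unfolding u_def using DERIV_chain2[of "\<lambda>z. z powr k" _ "\<lambda>t. Z (\<sigma> t)" s, OF has_real_derivative_powr[OF zp[unfolded z_def], of k] dz]
      by (simp add: z_def)
    moreover have "(k * z powr (k - 1)) * ((W (\<sigma> s) / k) * inverse (z powr (k-1))) = du s"
      using zp k3 by (simp add: du_def field_simps)
    ultimately show "(u has_real_derivative du s) (at s)" by simp
    have dw: "(du has_real_derivative (z powr (k-1) * p (T (\<sigma> s)) + z^2) * inverse (z powr (k-1))) (at s)"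
      unfolding du_def z_def using \<sigma>open[OF s] by (intro DERIV_chain2[OF dW d\<sigma>[OF s]]) auto
    have "(z powr (k-1) * p (T (\<sigma> s)) + z^2) * inverse (z powr (k-1)) = p s + z^2 / z powr (k-1)"
      using zp T\<sigma>[of s] s by (simp add: field_simps)
    also have "z^2 / z powr (k-1) = 1 / (u s powr \<alpha>)"
    proof -
      have "u s powr \<alpha> = z powr (k * \<alpha>)" unfolding u_def z_def[symmetric] by (simp add: powr_powr)
      also have "k * \<alpha> = k - 3" using kdef by (simp add: algebra_simps)
      finally have "u s powr \<alpha> = z powr (k - 3)" .
      moreover have "z^2 = z powr 2" using zp by (simp add: powr_numeral)
      moreover have "z powr 2 / z powr (k-1) = 1 / z powr (k - 3)"
      proof -
        have "z powr 2 / z powr (k-1) = z powr (2 - (k-1))" by (rule powr_diff[symmetric])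
        also have "2 - (k-1) = - (k - 3)" by simp
        also have "z powr (- (k - 3)) = 1 / z powr (k - 3)" by (rule powr_minus_divide)
        finally show ?thesis .
      qed
      ultimately show ?thesis by simp
    qed
    finally show "(du has_real_derivative p s + 1 / (u s powr \<alpha>)) (at s)" using dw by simp
  qed
  have "(du \<longlongrightarrow> du ta) (at ta within {ta..tb})"
    using cdu tab by (simp add: continuous_on_def)
  then have la: "(du \<longlongrightarrow> W 0) (at_right ta)"
    using tab by (simp add: at_within_Icc_at_right du_def \<sigma>a)
  have "(du \<longlongrightarrow> du tb) (at tb within {ta..tb})"
    using cdu tab by (simp add: continuous_on_def)
  then have lb: "(du \<longlongrightarrow> W \<tau>b) (at_left tb)"
    using tab by (simp add: at_within_Icc_at_left du_def \<sigma>b)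
  show ?thesis
    using tab cu ua ub sol la lb unfolding ta_def tb_def by blast
qed

lemma solves_on_transfer:
  assumes "solves_on \<alpha> p u1 du1 a b" and "\<And>s. a < s \<Longrightarrow> s < b \<Longrightarrow> u s = u1 s \<and> du s = du1 s"
  shows "solves_on \<alpha> p u du a b"
  unfolding solves_on_def
proof (intro ballI conjI)
  fix s assume s: "s \<in> {a<..<b}"
  have h: "u1 s > 0" "(u1 has_real_derivative du1 s) (at s)"
      "(du1 has_real_derivative (p s + 1 / (u1 s powr \<alpha>))) (at s)"
    using assms(1) s unfolding solves_on_def by auto
  have e: "\<And>x. x \<in> {a<..<b} \<Longrightarrow> u1 x = u x" "\<And>x. x \<in> {a<..<b} \<Longrightarrow> du1 x = du x"
    using assms(2) by auto
  show "u s > 0" using h e s by auto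
  show "(u has_real_derivative du s) (at s)"
    using has_field_derivative_transform_within_open[OF h(2) _ s e(1)] e(2)[OF s] by simp
  show "(du has_real_derivative (p s + 1 / (u s powr \<alpha>))) (at s)"
    using has_field_derivative_transform_within_open[OF h(3) _ s e(2)] e(1)[OF s] by simp
qed

lemma tendsto_right_transfer:
  fixes f g :: "real \<Rightarrow> real"
  assumes "(g \<longlongrightarrow> l) (at_right a)" "a < b" "\<And>s. a < s \<Longrightarrow> s < b \<Longrightarrow> f s = g s"
  shows "(f \<longlongrightarrow> l) (at_right a)"
proof -
  have "eventually (\<lambda>x. x \<in> {a<..<b}) (at_right a)" by (rule eventually_at_right_real[OF assms(2)])
  then have "eventually (\<lambda>x. f x = g x) (at_right a)" by eventually_elim (use assms(3) in auto)
  then show ?thesis using assms(1) tendsto_cong by blast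
qed

lemma tendsto_left_transfer:
  fixes f g :: "real \<Rightarrow> real"
  assumes "(g \<longlongrightarrow> l) (at_left b)" "a < b" "\<And>s. a < s \<Longrightarrow> s < b \<Longrightarrow> f s = g s"
  shows "(f \<longlongrightarrow> l) (at_left b)"
proof -
  have "eventually (\<lambda>x. x \<in> {a<..<b}) (at_left b)" by (rule eventually_at_left_real[OF assms(2)])
  then have "eventually (\<lambda>x. f x = g x) (at_left b)" by eventually_elim (use assms(3) in auto)
  then show ?thesis using assms(1) tendsto_cong by blast
qed

lemma strict_chain:
  fixes t :: "nat \<Rightarrow> real"
  assumes "\<forall>k<n. t k < t (Suc k)" "i < j" "j \<le> n"
  shows "t i < t j"
  using assms(2,3)
proof (induction j)
  case 0 then show ?case by simp
next
  case (Suc j)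
  have "t j < t (Suc j)" using assms(1) Suc.prems by auto
  then show ?case using Suc by (cases "i = j") auto
qed

lemma glue:
  fixes \<alpha> p1 p2 :: real and p :: "real \<Rightarrow> real"
  assumes flight: "\<And>M. \<exists>V>0. \<forall>ta va. va > V \<longrightarrow> (\<exists>tb u du w. ta < tb \<and> continuous_on {ta..tb} u \<and>
      u ta = 0 \<and> u tb = 0 \<and> solves_on \<alpha> p u du ta tb \<and> (du \<longlongrightarrow> va) (at_right ta) \<and> w > M \<and>
      (du \<longlongrightarrow> - w) (at_left tb))"
  shows "\<exists>\<gamma>>0. \<forall>t0 v0. v0 > \<gamma> \<longrightarrow> (\<exists>u du t. bounces_n_times \<alpha> p1 p2 p t0 v0 n u du t)"
proof (induction n)
  case 0
  show ?case
  proof (intro exI[of _ 1] conjI allI impI)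
    fix t0 v0 :: real
    show "\<exists>u du t. bounces_n_times \<alpha> p1 p2 p t0 v0 0 u du t"
      by (rule exI[of _ "\<lambda>_. 0"], rule exI[of _ "\<lambda>_. v0"], rule exI[of _ "\<lambda>_. t0"])
         (simp add: bounces_n_times_def)
  qed simp
next
  case (Suc n)
  then obtain \<gamma> where g0: "\<gamma> > 0" and tail: "\<And>t0 v0. v0 > \<gamma> \<Longrightarrow> \<exists>u du t. bounces_n_times \<alpha> p1 p2 p t0 v0 n u du t"
    by blast
  define thr where "thr = vel_threshold \<alpha> p1 p2"
  obtain V where V0: "V > 0" and fl: "\<And>ta va. va > V \<Longrightarrow> (\<exists>tb u du w. ta < tb \<and> continuous_on {ta..tb} u \<and>
      u ta = 0 \<and> u tb = 0 \<and> solves_on \<alpha> p u du ta tb \<and> (du \<longlongrightarrow> va) (at_right ta) \<and> w > max \<gamma> thr \<and>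
      (du \<longlongrightarrow> - w) (at_left tb))"
    using flight[of "max \<gamma> thr"] by blast
  show ?case
  proof (intro exI[of _ V] conjI allI impI V0)
    fix t0 v0 :: real assume v0: "v0 > V"
    obtain t1 u1 du1 w where t01: "t0 < t1" and cu1: "continuous_on {t0..t1} u1"
      and u1a: "u1 t0 = 0" and u1b: "u1 t1 = 0" and s1: "solves_on \<alpha> p u1 du1 t0 t1"
      and l1a: "(du1 \<longlongrightarrow> v0) (at_right t0)" and wM: "w > max \<gamma> thr" and l1b: "(du1 \<longlongrightarrow> - w) (at_left t1)"
      using fl[OF v0] by blast
    obtain u2 du2 t' where B: "bounces_n_times \<alpha> p1 p2 p t1 w n u2 du2 t'"
      using tail[of w t1] wM by auto
    have t'0: "t' 0 = t1" and mono: "\<forall>k<n. t' k < t' (Suc k)" and cu2: "continuous_on {t' 0..t' n} u2"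
      and z2: "\<forall>k\<le>n. u2 (t' k) = 0" and s2: "\<forall>k<n. solves_on \<alpha> p u2 du2 (t' k) (t' (Suc k))"
      and l2a: "(du2 \<longlongrightarrow> w) (at_right (t' 0))"
      and imp2: "\<forall>k\<in>{1..n}. \<exists>w. w < 0 \<and> (du2 \<longlongrightarrow> w) (at_left (t' k)) \<and>
        (k < n \<longrightarrow> (du2 \<longlongrightarrow> - w) (at_right (t' k)) \<and> - w > thr)"
      using B unfolding bounces_n_times_def thr_def by auto
    have t'ge: "t' k > t1" if "1 \<le> k" "k \<le> n" for k
      using strict_chain[OF mono, of 0 k] that t'0 by auto
    have t'ge0: "t' k \<ge> t1" if "k \<le> n" for k
      using t'ge[of k] that t'0 by (cases k) auto
    define t where "t = (\<lambda>k. if k = 0 then t0 else t' (k - 1))"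
    define u where "u = (\<lambda>s. if s \<le> t1 then u1 s else u2 s)"
    define du where "du = (\<lambda>s. if s < t1 then du1 s else du2 s)"
    have eq1: "u s = u1 s \<and> du s = du1 s" if "s < t1" for s
      using that by (simp add: u_def du_def)
    have eq2: "u s = u2 s \<and> du s = du2 s" if "s > t1" for s
      using that by (simp add: u_def du_def)
    have "bounces_n_times \<alpha> p1 p2 p t0 v0 (Suc n) u du t"
      unfolding bounces_n_times_def
    proof (intro conjI)
      show "t 0 = t0" by (simp add: t_def)
      show "\<forall>k<Suc n. t k < t (Suc k)"
      proof (intro allI impI)
        fix k assume "k < Suc n"
        then show "t k < t (Suc k)"
          using t01 t'0 mono by (cases k) (auto simp: t_def)
      qed
      show "continuous_on {t 0..t (Suc n)} u"
      proof -
        have "{t 0..t (Suc n)} = {t0..t1} \<union> {t1..t' n}"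
          using t'ge0[of n] t01 by (auto simp: t_def)
        moreover have "continuous_on {t0..t1} u"
          by (rule continuous_on_cong[THEN iffD1, OF refl _ cu1]) (auto simp: u_def)
        moreover have "continuous_on {t1..t' n} u"
          by (rule continuous_on_cong[THEN iffD1, OF refl _ cu2[unfolded t'0]])
             (use u1b z2 t'0 in \<open>auto simp: u_def\<close>)
        ultimately show ?thesis by (auto intro: continuous_on_closed_Un)
      qed
      show "\<forall>k\<le>Suc n. u (t k) = 0"
      proof (intro allI impI)
        fix k assume k: "k \<le> Suc n"
        show "u (t k) = 0"
        proof (cases k)
          case 0 then show ?thesis using t01 u1a by (simp add: t_def u_def)
        next
          case (Suc j)
          then have j: "j \<le> n" using k by simp
          show ?thesis
          proof (cases "j = 0")
            case True then show ?thesis using Suc u1b t'0 by (simp add: t_def u_def)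
          next
            case False
            then have "t' j > t1" using t'ge[of j] j by simp
            then show ?thesis using Suc z2 j by (simp add: t_def u_def)
          qed
        qed
      qed
      show "\<forall>k<Suc n. solves_on \<alpha> p u du (t k) (t (Suc k))"
      proof (intro allI impI)
        fix k assume k: "k < Suc n"
        show "solves_on \<alpha> p u du (t k) (t (Suc k))"
        proof (cases k)
          case 0
          then show ?thesis using t'0 by (simp add: t_def) (rule solves_on_transfer[OF s1 eq1], auto)
        next
          case (Suc j)
          then have "j < n" using k by simp
          then have sj: "solves_on \<alpha> p u2 du2 (t' j) (t' (Suc j))" and ge: "t' j \<ge> t1" using s2 t'ge0 by auto
          have "solves_on \<alpha> p u du (t' j) (t' (Suc j))"
            by (rule solves_on_transfer[OF sj]) (use ge eq2 in auto)
          then show ?thesis using Suc by (simp add: t_def)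
        qed
      qed
      show "(du \<longlongrightarrow> v0) (at_right (t 0))"
        using tendsto_right_transfer[OF l1a t01] eq1 by (simp add: t_def)
      show "\<forall>k\<in>{1..Suc n}. \<exists>w. w < 0 \<and> (du \<longlongrightarrow> w) (at_left (t k)) \<and>
        (k < Suc n \<longrightarrow> (du \<longlongrightarrow> - w) (at_right (t k)) \<and> - w > vel_threshold \<alpha> p1 p2)"
      proof
        fix k assume k: "k \<in> {1..Suc n}"
        show "\<exists>w. w < 0 \<and> (du \<longlongrightarrow> w) (at_left (t k)) \<and>
          (k < Suc n \<longrightarrow> (du \<longlongrightarrow> - w) (at_right (t k)) \<and> - w > vel_threshold \<alpha> p1 p2)"
        proof (cases "k = 1")
          case True
          have L: "(du \<longlongrightarrow> - w) (at_left (t k))"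
            using tendsto_left_transfer[OF l1b t01] eq1 True t'0 by (simp add: t_def)
          have R: "(du \<longlongrightarrow> - (- w)) (at_right (t k)) \<and> - (- w) > vel_threshold \<alpha> p1 p2" if "k < Suc n"
          proof
            have "n \<ge> 1" using that True by simp
            then have lt: "t' 0 < t' 1" using mono by auto
            show "(du \<longlongrightarrow> - (- w)) (at_right (t k))"
              using tendsto_right_transfer[OF l2a lt] eq2 t'0 True by (simp add: t_def)
            show "- (- w) > vel_threshold \<alpha> p1 p2" using wM by (simp add: thr_def)
          qed
          show ?thesis using L R wM g0 by (intro exI[of _ "- w"]) auto
        next
          case False
          then obtain j where kj: "k = Suc j" and j: "1 \<le> j" "j \<le> n" using k by (cases k) auto
          obtain w' where w'0: "w' < 0" and L2: "(du2 \<longlongrightarrow> w') (at_left (t' j))"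
            and R2: "j < n \<longrightarrow> (du2 \<longlongrightarrow> - w') (at_right (t' j)) \<and> - w' > thr"
          proof -
            have "j \<in> {1..n}" using j by simp
            then show ?thesis using imp2 that by blast
          qed
          have lt: "t' (j - 1) < t' j"
          proof -
            have "j - 1 < n" using j by simp
            then have "t' (j - 1) < t' (Suc (j - 1))" using mono by blast
            then show ?thesis using j by simp
          qed
          have ge: "t' (j - 1) \<ge> t1" using t'ge0[of "j - 1"] j by simp
          have L: "(du \<longlongrightarrow> w') (at_left (t k))"
            using tendsto_left_transfer[OF L2 lt] eq2 ge kj by (simp add: t_def)
          have R: "(du \<longlongrightarrow> - w') (at_right (t k)) \<and> - w' > vel_threshold \<alpha> p1 p2" if "k < Suc n"
          proof -
            have jn: "j < n" using that kj by simp
            have lt2: "t' j < t' (Suc j)" using mono jn by auto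
            have "t' j > t1" using t'ge j by auto
            then show ?thesis
              using tendsto_right_transfer[of du2 "- w'" "t' j" "t' (Suc j)" du] R2 jn lt2 eq2 kj
              by (auto simp: t_def thr_def)
          qed
          show ?thesis using L R w'0 by blast
        qed
      qed
    qed
    then show "\<exists>u du t. bounces_n_times \<alpha> p1 p2 p t0 v0 (Suc n) u du t" by blast
  qed
qed

locale fl =
  fixes \<alpha> p1 p2 :: real and p :: "real \<Rightarrow> real" and Lp ta va :: real
  assumes a0: "0 < \<alpha>" and a1: "\<alpha> < 1" and p21: "p2 \<le> p1" and p10: "p1 < 0"
    and pb: "\<And>t. p2 \<le> p t \<and> p t \<le> p1"
    and Lp0: "0 \<le> Lp" and plip: "\<And>s t. \<bar>p s - p t\<bar> \<le> Lp * \<bar>s - t\<bar>"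
    and va0: "0 < va"
    and vaA: "4 * (3 / (1 - \<alpha>)) * (- p2) * (max 1 ((2 / (- p1)) powr (1 / (3 / (1 - \<alpha>) - 3)))) powr (3 / (1 - \<alpha>)) \<le> va^2"
    and vaS: "2 * (- p2) * (max (4 * max 1 ((2 / (- p1)) powr (1 / (3 / (1 - \<alpha>) - 3))))
                 ((2 / ((- p1) * (1 - \<alpha>))) powr (1 / (3 / (1 - \<alpha>) - 3)))) powr (3 / (1 - \<alpha>)) \<le> va^2"
begin

definition "aa = - p1"
definition "bb = - p2"
definition "kk = 3 / (1 - \<alpha>)"
definition "ee = kk - 1"
definition "z1 = max 1 ((2 / aa) powr (1 / (ee - 2)))"
definition "\<kappa> = (aa / 2) * z1 powr ee"
definition "Zs = max (4 * z1) ((2 / (aa * (1 - \<alpha>))) powr (1 / (ee - 2)))"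
definition "\<sigma>0 = 2 * kk * z1 / va"
definition "W1 = va + z1^2 * \<sigma>0"
definition "D1 = W1 / \<kappa> + 1"
definition "Zc = z1 + W1 * D1 / kk"
definition "c0 = sqrt (aa * va^2 / (4 * bb))"

lemma aa0: "aa > 0" and bb0: "bb > 0" and ab: "aa \<le> bb"
  using p10 p21 by (auto simp: aa_def bb_def)

lemma kk3: "kk > 3" and kk1a: "kk * (1 - \<alpha>) = 3" and ee2: "ee > 2" and ee_eq: "ee - 2 = kk - 3"
proof -
  have "1 - \<alpha> \<noteq> 0" using a1 by simp
  then show "kk * (1 - \<alpha>) = 3" unfolding kk_def by (simp add: divide_simps)
  have "3 / (1 - \<alpha>) > 3" using a0 a1 by (simp add: field_simps)
  then show "kk > 3" by (simp add: kk_def)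
  then show "ee > 2" by (simp add: ee_def)
  show "ee - 2 = kk - 3" by (simp add: ee_def)
qed

lemma z1_ge1: "z1 \<ge> 1" by (simp add: z1_def)

lemma z1_prop: assumes "z \<ge> z1" shows "z^2 \<le> (aa / 2) * z powr ee"
proof -
  have z0: "z > 0" using assms z1_ge1 by simp
  have "(2 / aa) = ((2 / aa) powr (1 / (ee - 2))) powr (ee - 2)"
    using aa0 ee2 by (simp add: powr_powr)
  also have "\<dots> \<le> z1 powr (ee - 2)" using ee2 by (intro powr_mono2) (auto simp: z1_def)
  also have "\<dots> \<le> z powr (ee - 2)" using ee2 assms z1_ge1 by (intro powr_mono2) auto
  finally have h: "2 / aa \<le> z powr (ee - 2)" .
  have "z powr ee = z powr ((ee - 2) + 2)" by simp
  also have "\<dots> = z powr (ee - 2) * z powr 2" by (rule powr_add)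
  also have "z powr 2 = z^2" using z0 by (simp add: powr_numeral)
  finally have "z powr ee = z powr (ee - 2) * z^2" .
  then have "(aa / 2) * z powr ee = (aa / 2) * z powr (ee - 2) * z^2" by simp
  moreover have "(aa / 2) * z powr (ee - 2) \<ge> 1"
    using h aa0 by (simp add: field_simps)
  moreover have "1 * z^2 \<le> (aa / 2) * z powr (ee - 2) * z^2"
    using calculation(2) by (intro mult_right_mono) auto
  ultimately show ?thesis by (metis mult_1)
qed

lemma \<kappa>0: "\<kappa> > 0" using aa0 z1_ge1 by (simp add: \<kappa>_def)

lemma \<sigma>00: "\<sigma>0 > 0" using kk3 z1_ge1 va0 by (simp add: \<sigma>0_def)

lemma W10: "W1 > 0" using va0 \<sigma>00 by (simp add: W1_def add_pos_nonneg)

lemma D10: "D1 > 0" using W10 \<kappa>0 by (simp add: D1_def add_pos_nonneg)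

lemma Zc_z1: "Zc \<ge> z1" using W10 D10 kk3 by (simp add: Zc_def)

lemma vaA': "4 * kk * bb * z1 powr (ee + 1) \<le> va^2"
  using vaA by (simp add: kk_def bb_def ee_def z1_def aa_def)

lemma vaS': "2 * bb * Zs powr kk \<le> va^2"
  using vaS by (simp add: kk_def bb_def ee_def z1_def aa_def Zs_def)

definition "Xs = (SOME X. X 0 = (ta, 0, va) \<and> (\<forall>S. continuous_on {0..S} X) \<and>
   (\<forall>t>0. (X has_vector_derivative vf kk p Zc (X t)) (at t)))"

lemma Xs: "Xs 0 = (ta, 0, va) \<and> (\<forall>S. continuous_on {0..S} Xs) \<and>
   (\<forall>t>0. (Xs has_vector_derivative vf kk p Zc (Xs t)) (at t))"
proof -
  have "\<exists>L\<ge>0. \<forall>x y. norm (vf kk p Zc x - vf kk p Zc y) \<le> L * norm (x - y)"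
  proof (rule vf_lip)
    show "0 \<le> Zc" using Zc_z1 z1_ge1 by simp
    show "2 \<le> kk" using kk3 by simp
    show "\<bar>p t\<bar> \<le> - p2" for t using pb[of t] p10 by auto
  qed (use plip Lp0 in auto)
  then obtain L where "L \<ge> 0" "\<And>x y. norm (vf kk p Zc x - vf kk p Zc y) \<le> L * norm (x - y)" by blast
  from picard_exists[OF this, of "(ta, 0, va)"]
  show ?thesis unfolding Xs_def by (rule someI_ex)
qed

definition "T = (\<lambda>\<tau>. fst (Xs \<tau>))"
definition "Z = (\<lambda>\<tau>. fst (snd (Xs \<tau>)))"
definition "W = (\<lambda>\<tau>. snd (snd (Xs \<tau>)))"
definition "Wd = (\<lambda>\<tau>. clp Zc (Z \<tau>) powr ee * p (T \<tau>) + (clp Zc (Z \<tau>))^2)"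

lemma init: "T 0 = ta" "Z 0 = 0" "W 0 = va"
  using Xs by (auto simp: T_def Z_def W_def)

lemma cT: "continuous_on {0..S} T" and cZ: "continuous_on {0..S} Z" and cW: "continuous_on {0..S} W"
  using Xs unfolding T_def Z_def W_def by (auto intro!: continuous_intros)

lemma cT': "0 \<le> a \<Longrightarrow> continuous_on {a..b} T" by (rule continuous_on_subset[OF cT[of b]]) auto
lemma cZ': "0 \<le> a \<Longrightarrow> continuous_on {a..b} Z" by (rule continuous_on_subset[OF cZ[of b]]) auto
lemma cW': "0 \<le> a \<Longrightarrow> continuous_on {a..b} W" by (rule continuous_on_subset[OF cW[of b]]) auto

lemma dT: "\<tau> > 0 \<Longrightarrow> (T has_real_derivative clp Zc (Z \<tau>) powr ee) (at \<tau>)"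
  and dZ: "\<tau> > 0 \<Longrightarrow> (Z has_real_derivative W \<tau> / kk) (at \<tau>)"
  and dW: "\<tau> > 0 \<Longrightarrow> (W has_real_derivative Wd \<tau>) (at \<tau>)"
proof -
  assume t: "\<tau> > 0"
  have d: "(Xs has_vector_derivative vf kk p Zc (Xs \<tau>)) (at \<tau>)" using Xs t by blast
  show "(T has_real_derivative clp Zc (Z \<tau>) powr ee) (at \<tau>)"
    using vd_fst[OF d] by (simp add: T_def Z_def vf_def ee_def)
  show "(Z has_real_derivative W \<tau> / kk) (at \<tau>)"
    using vd_fst[OF vd_snd[OF d]] by (simp add: W_def Z_def vf_def)
  have "((\<lambda>x. snd (snd (Xs x))) has_vector_derivative snd (snd (vf kk p Zc (Xs \<tau>)))) (at \<tau>)"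
    by (rule vd_snd[OF vd_snd[OF d]])
  then show "(W has_real_derivative Wd \<tau>) (at \<tau>)"
    by (simp add: W_def Wd_def vf_def T_def Z_def ee_def has_real_derivative_iff_has_vector_derivative)
qed

lemma Wd_low: assumes "Z \<tau> \<le> z1" shows "Wd \<tau> \<ge> - bb * z1 powr ee"
proof -
  define c where "c = clp Zc (Z \<tau>)"
  have c: "0 \<le> c" "c \<le> z1" using assms z1_ge1 Zc_z1 by (auto simp: c_def clp_def)
  have "c powr ee \<le> z1 powr ee" using c ee2 by (intro powr_mono2) auto
  moreover have "p (T \<tau>) \<ge> - bb" using pb by (simp add: bb_def)
  moreover have "c powr ee * p (T \<tau>) \<ge> c powr ee * (- bb)" using calculation by (intro mult_left_mono) auto
  moreover have "bb * c powr ee \<le> bb * z1 powr ee" using calculation bb0 by (intro mult_left_mono) auto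
  ultimately have "c powr ee * p (T \<tau>) \<ge> - bb * z1 powr ee" by (simp add: algebra_simps)
  then show ?thesis unfolding Wd_def c_def[symmetric] by (smt (verit) zero_le_power2)
qed

lemma Wd_up: assumes "Z \<tau> \<le> z1" shows "Wd \<tau> \<le> z1^2"
proof -
  define c where "c = clp Zc (Z \<tau>)"
  have c: "0 \<le> c" "c \<le> z1" using assms z1_ge1 Zc_z1 by (auto simp: c_def clp_def)
  have "c powr ee * p (T \<tau>) \<le> 0" using pb[of "T \<tau>"] p10 c by (simp add: mult_nonneg_nonpos)
  moreover have "c^2 \<le> z1^2" using c by (simp add: power_mono)
  ultimately show ?thesis by (simp add: Wd_def c_def[symmetric])
qed

lemma Wd_neg: assumes "Z \<tau> \<ge> z1" shows "Wd \<tau> \<le> - \<kappa>"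
proof -
  define c where "c = clp Zc (Z \<tau>)"
  have c: "z1 \<le> c" "c \<le> Zc" using assms z1_ge1 Zc_z1 by (auto simp: c_def clp_def)
  have "c powr ee * p (T \<tau>) \<le> c powr ee * (- aa)" using pb[of "T \<tau>"] by (intro mult_left_mono) (auto simp: aa_def)
  moreover have "c^2 \<le> (aa / 2) * c powr ee" using z1_prop c by simp
  moreover have "z1 powr ee \<le> c powr ee" using c ee2 z1_ge1 by (intro powr_mono2) auto
  moreover have "(aa / 2) * z1 powr ee \<le> (aa / 2) * c powr ee" using calculation aa0 by (intro mult_left_mono) auto
  ultimately have "Wd \<tau> \<le> - (aa / 2) * z1 powr ee" unfolding Wd_def c_def[symmetric]
    by (simp add: algebra_simps)
  then show ?thesis by (simp add: \<kappa>_def)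
qed

lemma clp_id: "0 \<le> z \<Longrightarrow> z \<le> Zc \<Longrightarrow> clp Zc z = z"
  by (simp add: clp_def)

lemma Aarith: "bb * z1 powr ee * \<sigma>0 \<le> va / 2"
proof -
  have "z1 powr (ee + 1) = z1 powr ee * z1" using z1_ge1 by (simp add: powr_add powr_one)
  then have "bb * z1 powr ee * \<sigma>0 = (4 * kk * bb * z1 powr (ee + 1)) / (2 * va)"
    using va0 by (simp add: \<sigma>0_def field_simps)
  also have "\<dots> \<le> va^2 / (2 * va)" using vaA' va0 by (intro divide_right_mono) auto
  also have "\<dots> = va / 2" using va0 by (simp add: power2_eq_square)
  finally show ?thesis .
qed

lemma A_Wlow:
  assumes s: "s \<le> \<sigma>0" and Zle: "\<And>\<tau>. 0 \<le> \<tau> \<Longrightarrow> \<tau> \<le> s \<Longrightarrow> Z \<tau> \<le> z1"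
    and t: "0 \<le> \<tau>" "\<tau> \<le> s"
  shows "W \<tau> \<ge> va / 2" "W \<tau> \<le> va + z1^2 * \<tau>"
proof -
  have "W \<tau> - W 0 \<ge> (- bb * z1 powr ee) * (\<tau> - 0)"
    by (rule deriv_lower[OF t(1) cW dW Wd_low]) (use Zle t in auto)
  moreover have "bb * z1 powr ee * \<tau> \<le> bb * z1 powr ee * \<sigma>0"
    using t s bb0 by (intro mult_left_mono) auto
  ultimately show "W \<tau> \<ge> va / 2" using Aarith init by simp
  have "W \<tau> - W 0 \<le> z1^2 * (\<tau> - 0)"
    by (rule deriv_upper[OF t(1) cW dW Wd_up]) (use Zle t in auto)
  then show "W \<tau> \<le> va + z1^2 * \<tau>" using init by simp
qed

lemma A_Zlow:
  assumes s: "s \<le> \<sigma>0" and Zle: "\<And>\<tau>. 0 \<le> \<tau> \<Longrightarrow> \<tau> \<le> s \<Longrightarrow> Z \<tau> \<le> z1"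
    and t: "0 \<le> \<tau>" "\<tau> \<le> s"
  shows "Z \<tau> \<ge> va * \<tau> / (2 * kk)"
proof -
  have "Z \<tau> - Z 0 \<ge> (va / (2 * kk)) * (\<tau> - 0)"
  proof (rule deriv_lower[OF t(1) cZ dZ])
    fix x assume x: "0 < x" "x < \<tau>"
    have "W x \<ge> va / 2" using A_Wlow[OF s Zle, of x] x t by auto
    then show "va / (2 * kk) \<le> W x / kk" using kk3 by (simp add: field_simps)
  qed simp
  then show ?thesis using init by simp
qed

lemma phaseA: "\<exists>t1. 0 < t1 \<and> t1 \<le> \<sigma>0 \<and> Z t1 = z1 \<and> (\<forall>\<tau>. 0 \<le> \<tau> \<and> \<tau> \<le> t1 \<longrightarrow> Z \<tau> \<le> z1)"
proof -
  have "\<exists>\<tau>. 0 \<le> \<tau> \<and> \<tau> \<le> \<sigma>0 \<and> Z \<tau> \<ge> z1"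
  proof (rule ccontr)
    assume "\<not> ?thesis"
    then have H: "\<And>\<tau>. 0 \<le> \<tau> \<Longrightarrow> \<tau> \<le> \<sigma>0 \<Longrightarrow> Z \<tau> < z1" by (meson not_le)
    have lt: "\<And>\<tau>. 0 \<le> \<tau> \<Longrightarrow> \<tau> \<le> \<sigma>0 \<Longrightarrow> Z \<tau> \<le> z1" "Z \<sigma>0 < z1"
      using H less_imp_le \<sigma>00 by auto
    have "Z \<sigma>0 \<ge> va * \<sigma>0 / (2 * kk)" using A_Zlow[OF order_refl lt(1)] \<sigma>00 by simp
    moreover have "va * \<sigma>0 / (2 * kk) = z1" using va0 kk3 by (simp add: \<sigma>0_def)
    ultimately show False using lt(2) by simp
  qed
  then obtain \<tau>' where t': "0 \<le> \<tau>'" "\<tau>' \<le> \<sigma>0" "Z \<tau>' \<ge> z1" by blast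
  from first_hit[OF t'(1) cZ _ t'(3)] init z1_ge1
  obtain t1 where t1: "0 < t1" "t1 \<le> \<tau>'" "Z t1 = z1" "\<And>s. 0 \<le> s \<and> s < t1 \<longrightarrow> Z s < z1" by auto
  show ?thesis
    using t1 t' by (intro exI[of _ t1]) (auto simp: le_less)
qed

definition "\<tau>1 = (SOME t1. 0 < t1 \<and> t1 \<le> \<sigma>0 \<and> Z t1 = z1 \<and> (\<forall>\<tau>. 0 \<le> \<tau> \<and> \<tau> \<le> t1 \<longrightarrow> Z \<tau> \<le> z1))"

lemma \<tau>1: "0 < \<tau>1" "\<tau>1 \<le> \<sigma>0" "Z \<tau>1 = z1" "\<And>\<tau>. 0 \<le> \<tau> \<Longrightarrow> \<tau> \<le> \<tau>1 \<Longrightarrow> Z \<tau> \<le> z1"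
  using someI_ex[OF phaseA] unfolding \<tau>1_def[symmetric] by auto

lemma A_facts:
  assumes "0 \<le> \<tau>" "\<tau> \<le> \<tau>1"
  shows "W \<tau> \<ge> va / 2" "W \<tau> \<le> W1" "Z \<tau> \<ge> va * \<tau> / (2 * kk)" "Z \<tau> \<le> z1"
proof -
  show "W \<tau> \<ge> va / 2" using A_Wlow[OF \<tau>1(2) \<tau>1(4)] assms by auto
  have "W \<tau> \<le> va + z1^2 * \<tau>" using A_Wlow[OF \<tau>1(2) \<tau>1(4)] assms by auto
  also have "\<dots> \<le> W1" using assms \<tau>1(2) unfolding W1_def by (intro add_left_mono mult_left_mono) auto
  finally show "W \<tau> \<le> W1" .
  show "Z \<tau> \<ge> va * \<tau> / (2 * kk)" using A_Zlow[OF \<tau>1(2) \<tau>1(4)] assms by auto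
  show "Z \<tau> \<le> z1" using \<tau>1(4) assms by auto
qed

lemma B_bounds:
  assumes s: "\<tau>1 \<le> s" and Wp: "\<And>\<tau>. \<tau>1 \<le> \<tau> \<Longrightarrow> \<tau> < s \<Longrightarrow> W \<tau> > 0"
    and t: "\<tau>1 \<le> \<tau>" "\<tau> \<le> s"
  shows "Z \<tau> \<ge> z1" "W \<tau> \<le> W \<tau>1 - \<kappa> * (\<tau> - \<tau>1)" "Z \<tau> \<le> z1 + W1 * (\<tau> - \<tau>1) / kk"
proof -
  have Zge: "Z x \<ge> z1" if x: "\<tau>1 \<le> x" "x \<le> s" for x
  proof -
    have "Z x - Z \<tau>1 \<ge> 0 * (x - \<tau>1)"
    proof (rule deriv_lower[OF x(1) cZ[THEN continuous_on_subset] dZ])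
      fix y assume y: "\<tau>1 < y" "y < x"
      then show "0 \<le> W y / kk" using Wp[of y] x kk3 by simp
    qed (use \<tau>1 in auto)
    then show ?thesis using \<tau>1 by simp
  qed
  show "Z \<tau> \<ge> z1" using Zge t by simp
  have Wup: "W x - W \<tau>1 \<le> (- \<kappa>) * (x - \<tau>1)" if x: "\<tau>1 \<le> x" "x \<le> s" for x
    by (rule deriv_upper[OF x(1) cW[THEN continuous_on_subset] dW Wd_neg])
       (use \<tau>1 x Zge in auto)
  show "W \<tau> \<le> W \<tau>1 - \<kappa> * (\<tau> - \<tau>1)" using Wup[OF t] by simp
  have "Z \<tau> - Z \<tau>1 \<le> (W1 / kk) * (\<tau> - \<tau>1)"
  proof (rule deriv_upper[OF t(1) cZ[THEN continuous_on_subset] dZ])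
    fix y assume y: "\<tau>1 < y" "y < \<tau>"
    have "\<kappa> * (y - \<tau>1) \<ge> 0" using y \<kappa>0 by simp
    then have "W y \<le> W \<tau>1" using Wup[of y] y t by linarith
    also have "\<dots> \<le> W1" using A_facts[of \<tau>1] \<tau>1 by auto
    finally show "W y / kk \<le> W1 / kk" using kk3 by (simp add: divide_right_mono)
  qed (use \<tau>1 in auto)
  then show "Z \<tau> \<le> z1 + W1 * (\<tau> - \<tau>1) / kk" using \<tau>1 by simp
qed

lemma phaseB: "\<exists>tm. \<tau>1 < tm \<and> tm \<le> \<tau>1 + D1 \<and> W tm = 0 \<and> (\<forall>\<tau>. \<tau>1 \<le> \<tau> \<and> \<tau> < tm \<longrightarrow> W \<tau> > 0)"
proof -
  have W\<tau>1: "W \<tau>1 > 0" using A_facts[of \<tau>1] \<tau>1 va0 by auto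
  have "\<exists>\<tau>. \<tau>1 \<le> \<tau> \<and> \<tau> \<le> \<tau>1 + D1 \<and> W \<tau> \<le> 0"
  proof (rule ccontr)
    assume "\<not> ?thesis"
    then have H: "\<And>\<tau>. \<tau>1 \<le> \<tau> \<Longrightarrow> \<tau> \<le> \<tau>1 + D1 \<Longrightarrow> W \<tau> > 0" by (meson not_le)
    have Wp: "\<And>\<tau>. \<tau>1 \<le> \<tau> \<Longrightarrow> \<tau> < \<tau>1 + D1 \<Longrightarrow> W \<tau> > 0" "W (\<tau>1 + D1) > 0"
      using H D10 by auto
    have "W (\<tau>1 + D1) \<le> W \<tau>1 - \<kappa> * D1"
      using B_bounds(2)[of "\<tau>1 + D1" "\<tau>1 + D1"] Wp(1) D10 by simp
    also have "\<dots> \<le> W1 - \<kappa> * D1" using A_facts[of \<tau>1] \<tau>1 by auto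
    also have "\<dots> = - \<kappa>" using \<kappa>0 by (simp add: D1_def field_simps)
    finally show False using Wp(2) \<kappa>0 by simp
  qed
  then obtain \<tau>' where t': "\<tau>1 \<le> \<tau>'" "\<tau>' \<le> \<tau>1 + D1" "W \<tau>' \<le> 0" by blast
  from first_hit_down[OF t'(1) cW'[of \<tau>1 \<tau>'] W\<tau>1 t'(3)] \<tau>1
  obtain tm where "\<tau>1 < tm" "tm \<le> \<tau>'" "W tm = 0" "\<And>s. \<tau>1 \<le> s \<and> s < tm \<longrightarrow> W s > 0" by auto
  then show ?thesis using t' by (intro exI[of _ tm]) auto
qed

definition "\<tau>m = (SOME tm. \<tau>1 < tm \<and> tm \<le> \<tau>1 + D1 \<and> W tm = 0 \<and> (\<forall>\<tau>. \<tau>1 \<le> \<tau> \<and> \<tau> < tm \<longrightarrow> W \<tau> > 0))"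

lemma \<tau>m: "\<tau>1 < \<tau>m" "\<tau>m \<le> \<tau>1 + D1" "W \<tau>m = 0" "\<And>\<tau>. \<tau>1 \<le> \<tau> \<Longrightarrow> \<tau> < \<tau>m \<Longrightarrow> W \<tau> > 0"
  using someI_ex[OF phaseB] unfolding \<tau>m_def[symmetric] by auto

lemma B_facts:
  assumes "\<tau>1 \<le> \<tau>" "\<tau> \<le> \<tau>m"
  shows "Z \<tau> \<ge> z1" "Z \<tau> \<le> Zc" "W \<tau> \<ge> 0"
proof -
  show "Z \<tau> \<ge> z1" using B_bounds(1)[OF _ \<tau>m(4)] assms \<tau>m by auto
  have "Z \<tau> \<le> z1 + W1 * (\<tau> - \<tau>1) / kk" using B_bounds(3)[OF _ \<tau>m(4)] assms \<tau>m by auto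
  also have "\<dots> \<le> z1 + W1 * D1 / kk"
    using assms \<tau>m W10 kk3 by (intro add_left_mono divide_right_mono mult_left_mono) auto
  finally show "Z \<tau> \<le> Zc" by (simp add: Zc_def)
  show "W \<tau> \<ge> 0" using \<tau>m assms by (cases "\<tau> = \<tau>m") (auto simp: less_imp_le)
qed

definition "\<Phi> c \<tau> = (W \<tau>)^2 / 2 - (Z \<tau>)^3 / (1 - \<alpha>) + c * Z \<tau> powr kk"

lemma energy_deriv:
  assumes x: "0 < x" and z: "0 < Z x" "Z x \<le> Zc"
  shows "(\<Phi> c has_real_derivative W x * Z x powr ee * (p (T x) + c)) (at x)"
proof -
  have Wd: "Wd x = Z x powr ee * p (T x) + (Z x)^2" using z by (simp add: Wd_def clp_id)
  have d1: "((\<lambda>\<tau>. (W \<tau>)^2) has_real_derivative of_nat 2 * (Wd x * (W x)^(2 - Suc 0))) (at x)"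
    by (rule DERIV_power[OF dW[OF x]])
  have d2: "((\<lambda>\<tau>. (Z \<tau>)^3) has_real_derivative of_nat 3 * ((W x / kk) * (Z x)^(3 - Suc 0))) (at x)"
    by (rule DERIV_power[OF dZ[OF x]])
  have d3: "((\<lambda>\<tau>. Z \<tau> powr kk) has_real_derivative (kk * Z x powr (kk - 1)) * (W x / kk)) (at x)"
    using DERIV_chain2[of "\<lambda>z. z powr kk" _ Z x, OF has_real_derivative_powr[OF z(1)] dZ[OF x]] .
  have "(\<Phi> c has_real_derivative (of_nat 2 * (Wd x * (W x)^(2 - Suc 0))) / 2
      - (of_nat 3 * ((W x / kk) * (Z x)^(3 - Suc 0))) / (1 - \<alpha>) + c * ((kk * Z x powr (kk - 1)) * (W x / kk))) (at x)"
    unfolding \<Phi>_def by (intro DERIV_add DERIV_diff DERIV_cmult d3 DERIV_cdivide d1 d2)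
  moreover have "(of_nat 2 * (Wd x * (W x)^(2 - Suc 0))) / 2
      - (of_nat 3 * ((W x / kk) * (Z x)^(3 - Suc 0))) / (1 - \<alpha>) + c * ((kk * Z x powr (kk - 1)) * (W x / kk))
      = W x * Z x powr ee * (p (T x) + c)"
  proof -
    have k0: "kk \<noteq> 0" using kk3 by simp
    have a1': "1 - \<alpha> \<noteq> 0" using a1 by simp
    have "3 / (kk * (1 - \<alpha>)) = 1" using kk1a by simp
    moreover have "(3 * ((W x / kk) * (Z x)^2)) / (1 - \<alpha>) = (3 / (kk * (1 - \<alpha>))) * (W x * (Z x)^2)"
      using k0 a1' by (simp add: field_simps)
    ultimately have e3: "(3 * ((W x / kk) * (Z x)^2)) / (1 - \<alpha>) = W x * (Z x)^2" by simp
    have e2: "(of_nat 2 * (Wd x * (W x)^(2 - Suc 0))) / 2 = W x * (Z x powr ee * p (T x) + (Z x)^2)"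
      unfolding Wd by simp
    have e3': "(of_nat 3 * ((W x / kk) * (Z x)^(3 - Suc 0))) / (1 - \<alpha>) = W x * (Z x)^2"
      using e3 by simp
    have e4: "c * ((kk * Z x powr (kk - 1)) * (W x / kk)) = c * Z x powr ee * W x"
      using k0 by (simp add: ee_def)
    show ?thesis unfolding e2 e3' e4 by (simp add: algebra_simps)
  qed
  ultimately show ?thesis by simp
qed

lemma energy_mono:
  assumes ab: "0 \<le> s1" "s1 \<le> s2"
    and inner: "\<And>x. s1 < x \<Longrightarrow> x < s2 \<Longrightarrow> 0 < Z x \<and> Z x \<le> Zc \<and> W x * (p (T x) + c) \<ge> 0"
    and nn: "\<And>x. s1 \<le> x \<Longrightarrow> x \<le> s2 \<Longrightarrow> 0 \<le> Z x"
  shows "\<Phi> c s2 \<ge> \<Phi> c s1"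
proof -
  have cp: "continuous_on {s1..s2} (\<lambda>\<tau>. Z \<tau> powr kk)"
    by (rule continuous_on_powr'[OF cZ'[OF ab(1)] continuous_on_const]) (use nn kk3 in auto)
  have a1': "1 - \<alpha> \<noteq> 0" using a1 by simp
  have cont: "continuous_on {s1..s2} (\<Phi> c)"
    unfolding \<Phi>_def using a1'
    by (intro continuous_intros cW'[OF ab(1)] cZ'[OF ab(1)] cp) auto
  have "\<Phi> c s2 - \<Phi> c s1 \<ge> 0 * (s2 - s1)"
  proof (rule deriv_lower[OF ab(2) cont])
    fix x assume x: "s1 < x" "x < s2"
    then have x0: "0 < x" using ab by simp
    show "(\<Phi> c has_real_derivative W x * Z x powr ee * (p (T x) + c)) (at x)"
      using energy_deriv[OF x0] inner[OF x] by auto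
    have "W x * Z x powr ee * (p (T x) + c) = Z x powr ee * (W x * (p (T x) + c))" by simp
    also have "\<dots> \<ge> 0" using inner[OF x] by simp
    finally show "0 \<le> W x * Z x powr ee * (p (T x) + c)" .
  qed
  then show ?thesis by simp
qed

lemma Z_pos_A: "0 < \<tau> \<Longrightarrow> \<tau> \<le> \<tau>1 \<Longrightarrow> Z \<tau> > 0"
proof -
  assume t: "0 < \<tau>" "\<tau> \<le> \<tau>1"
  have "Z \<tau> \<ge> va * \<tau> / (2 * kk)" using A_facts t by simp
  moreover have "va * \<tau> / (2 * kk) > 0" using va0 t kk3 by simp
  ultimately show ?thesis by simp
qed

lemma energy2: "bb * Z \<tau>m powr kk \<ge> va^2 / 2"
proof -
  have "\<Phi> bb \<tau>m \<ge> \<Phi> bb 0"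
  proof (rule energy_mono)
    show "0 \<le> (0::real)" by simp
    show "0 \<le> \<tau>m" using \<tau>1 \<tau>m by simp
    fix x assume x: "0 < x" "x < \<tau>m"
    show "0 < Z x \<and> Z x \<le> Zc \<and> W x * (p (T x) + bb) \<ge> 0"
    proof (cases "x \<le> \<tau>1")
      case True
      then show ?thesis using Z_pos_A[OF x(1)] A_facts[of x] x Zc_z1 va0 pb[of "T x"]
        by (auto simp: bb_def)
    next
      case False
      then show ?thesis using B_facts[of x] x z1_ge1 pb[of "T x"] by (auto simp: bb_def)
    qed
  next
    fix x assume x: "0 \<le> x" "x \<le> \<tau>m"
    show "0 \<le> Z x"
    proof (cases "x \<le> \<tau>1")
      case True
      then show ?thesis using A_facts(3)[of x] x va0 kk3 by (smt (verit) divide_nonneg_pos mult_nonneg_nonneg)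
    next
      case False
      then show ?thesis using B_facts[of x] x z1_ge1 by auto
    qed
  qed
  moreover have "\<Phi> bb 0 = va^2 / 2" using init kk3 by (simp add: \<Phi>_def)
  moreover have "\<Phi> bb \<tau>m \<le> bb * Z \<tau>m powr kk"
  proof -
    have "Z \<tau>m \<ge> 0" using B_facts[of \<tau>m] \<tau>m z1_ge1 by auto
    then have "(Z \<tau>m)^3 / (1 - \<alpha>) \<ge> 0" using a1 by simp
    then show ?thesis using \<tau>m by (simp add: \<Phi>_def)
  qed
  ultimately show ?thesis by simp
qed

lemma Zm_ge: "Z \<tau>m \<ge> Zs"
proof (rule ccontr)
  assume "\<not> ?thesis"
  then have lt: "Z \<tau>m < Zs" by simp
  have "Z \<tau>m \<ge> 0" using B_facts[of \<tau>m] \<tau>m z1_ge1 by auto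
  then have "Z \<tau>m powr kk < Zs powr kk" using lt kk3 by (intro powr_less_mono2) auto
  then have "bb * Z \<tau>m powr kk < bb * Zs powr kk" using bb0 by simp
  then show False using energy2 vaS' by simp
qed

lemma Zm_props: "Z \<tau>m > z1" "Z \<tau>m powr (ee - 2) \<ge> 2 / (aa * (1 - \<alpha>))"
  "Z \<tau>m powr kk \<ge> 4 * z1 powr kk" "Z \<tau>m \<le> Zc"
proof -
  have Zs1: "Zs \<ge> 4 * z1" "Zs \<ge> (2 / (aa * (1 - \<alpha>))) powr (1 / (ee - 2))" by (auto simp: Zs_def)
  show "Z \<tau>m > z1" using Zm_ge Zs1 z1_ge1 by simp
  have pos: "2 / (aa * (1 - \<alpha>)) > 0" using aa0 a1 by simp
  have "2 / (aa * (1 - \<alpha>)) = ((2 / (aa * (1 - \<alpha>))) powr (1 / (ee - 2))) powr (ee - 2)"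
    using pos ee2 by (simp add: powr_powr)
  also have "\<dots> \<le> Z \<tau>m powr (ee - 2)" using Zm_ge Zs1 ee2 by (intro powr_mono2) auto
  finally show "Z \<tau>m powr (ee - 2) \<ge> 2 / (aa * (1 - \<alpha>))" .
  have "(4 * z1) powr kk \<le> Z \<tau>m powr kk" using Zm_ge Zs1 kk3 z1_ge1 by (intro powr_mono2) auto
  moreover have "(4 * z1) powr kk = 4 powr kk * z1 powr kk" using z1_ge1 by (simp add: powr_mult)
  moreover have "4 powr kk \<ge> 4 powr 1" using kk3 by (intro powr_mono) auto
  then have "4 powr kk \<ge> 4" by simp
  then have "4 * z1 powr kk \<le> 4 powr kk * z1 powr kk" by (intro mult_right_mono) auto
  ultimately show "Z \<tau>m powr kk \<ge> 4 * z1 powr kk" by simp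
  show "Z \<tau>m \<le> Zc" using B_facts[of \<tau>m] \<tau>m by auto
qed

lemma Phi_m: "\<Phi> aa \<tau>m \<ge> aa * Z \<tau>m powr kk / 2"
proof -
  define zm where "zm = Z \<tau>m"
  have zm0: "zm > 0" using Zm_props z1_ge1 by (simp add: zm_def)
  have "zm powr kk = zm powr ((kk - 3) + 3)" by simp
  also have "\<dots> = zm powr (kk - 3) * zm powr 3" by (rule powr_add)
  also have "zm powr 3 = zm^3" using zm0 by (simp add: powr_numeral)
  finally have e: "zm powr kk = zm powr (ee - 2) * zm^3" unfolding ee_eq .
  have "zm^3 / (1 - \<alpha>) = (2 / (aa * (1 - \<alpha>))) * zm^3 * (aa / 2)"
    using aa0 a1 by (simp add: field_simps)
  also have "\<dots> \<le> zm powr (ee - 2) * zm^3 * (aa / 2)"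
    using Zm_props(2) zm0 aa0 by (intro mult_right_mono) (auto simp: zm_def)
  also have "\<dots> = aa * zm powr kk / 2" using e by simp
  finally have "zm^3 / (1 - \<alpha>) \<le> aa * zm powr kk / 2" .
  then show ?thesis using \<tau>m by (simp add: \<Phi>_def zm_def[symmetric])
qed

lemma \<tau>m0: "\<tau>m > 0" using \<tau>1 \<tau>m by simp

lemma C_bounds:
  assumes s: "\<tau>m \<le> s" and Zg: "\<And>\<tau>. \<tau>m \<le> \<tau> \<Longrightarrow> \<tau> \<le> s \<Longrightarrow> Z \<tau> \<ge> z1"
    and t: "\<tau>m \<le> \<tau>" "\<tau> \<le> s"
  shows "W \<tau> \<le> - \<kappa> * (\<tau> - \<tau>m)" "Z \<tau> \<le> Z \<tau>m"
proof -
  have Wup: "W x \<le> - \<kappa> * (x - \<tau>m)" if x: "\<tau>m \<le> x" "x \<le> s" for x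
  proof -
    have "W x - W \<tau>m \<le> (- \<kappa>) * (x - \<tau>m)"
      by (rule deriv_upper[OF x(1) cW'[of \<tau>m x] dW Wd_neg]) (use \<tau>m0 x Zg in auto)
    then show ?thesis using \<tau>m by simp
  qed
  show "W \<tau> \<le> - \<kappa> * (\<tau> - \<tau>m)" using Wup t by simp
  have "Z \<tau> - Z \<tau>m \<le> 0 * (\<tau> - \<tau>m)"
  proof (rule deriv_upper[OF t(1) cZ'[of \<tau>m \<tau>] dZ])
    fix x assume x: "\<tau>m < x" "x < \<tau>"
    have "W x \<le> - \<kappa> * (x - \<tau>m)" using Wup x t by simp
    also have "\<dots> \<le> 0" using \<kappa>0 x by simp
    finally show "W x / kk \<le> 0" using kk3 by (simp add: divide_nonpos_pos)
  qed (use \<tau>m0 in auto)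
  then show "Z \<tau> \<le> Z \<tau>m" by simp
qed

lemma phaseC: "\<exists>t2. \<tau>m < t2 \<and> Z t2 = z1 \<and> (\<forall>\<tau>. \<tau>m \<le> \<tau> \<and> \<tau> < t2 \<longrightarrow> Z \<tau> > z1)"
proof -
  define D2 where "D2 = 1 + kk * Zc / \<kappa>"
  have Zc0: "Zc \<ge> 0" using Zc_z1 z1_ge1 by simp
  have D21: "D2 \<ge> 1" using kk3 Zc0 \<kappa>0 by (simp add: D2_def)
  have "\<exists>\<tau>. \<tau>m \<le> \<tau> \<and> \<tau> \<le> \<tau>m + D2 \<and> Z \<tau> \<le> z1"
  proof (rule ccontr)
    assume "\<not> ?thesis"
    then have H: "\<And>\<tau>. \<tau>m \<le> \<tau> \<Longrightarrow> \<tau> \<le> \<tau>m + D2 \<Longrightarrow> Z \<tau> > z1" by (meson not_le)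
    have Hg: "\<And>\<tau>. \<tau>m \<le> \<tau> \<Longrightarrow> \<tau> \<le> \<tau>m + D2 \<Longrightarrow> Z \<tau> \<ge> z1" using H less_imp_le by blast
    have "Z (\<tau>m + D2) - Z (\<tau>m + 1) \<le> (- \<kappa> / kk) * ((\<tau>m + D2) - (\<tau>m + 1))"
    proof (rule deriv_upper[OF _ cZ'[of "\<tau>m + 1" "\<tau>m + D2"] dZ])
      show "\<tau>m + 1 \<le> \<tau>m + D2" using D21 by simp
      fix x assume x: "\<tau>m + 1 < x" "x < \<tau>m + D2"
      have "W x \<le> - \<kappa> * (x - \<tau>m)" using C_bounds(1)[OF _ Hg, of "\<tau>m + D2" x] x D21 by simp
      also have "\<dots> \<le> - \<kappa>"
      proof -
        have "\<kappa> * 1 \<le> \<kappa> * (x - \<tau>m)" using x \<kappa>0 by (intro mult_left_mono) auto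
        then show ?thesis by simp
      qed
      finally show "W x / kk \<le> - \<kappa> / kk" using divide_right_mono[of "W x" "- \<kappa>" kk] kk3 by simp
    qed (use \<tau>m0 in auto)
    moreover have "(- \<kappa> / kk) * ((\<tau>m + D2) - (\<tau>m + 1)) = - Zc" using \<kappa>0 kk3 by (simp add: D2_def)
    moreover have "Z (\<tau>m + 1) \<le> Z \<tau>m" using C_bounds(2)[OF _ Hg, of "\<tau>m + D2" "\<tau>m + 1"] D21 by simp
    moreover have "Z (\<tau>m + D2) > z1" using H D21 by simp
    ultimately show False using Zm_props(4) z1_ge1 by simp
  qed
  then obtain \<tau>' where t': "\<tau>m \<le> \<tau>'" "\<tau>' \<le> \<tau>m + D2" "Z \<tau>' \<le> z1" by blast
  from first_hit_down[OF t'(1) cZ'[of \<tau>m \<tau>'] Zm_props(1) t'(3)] \<tau>m0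
  obtain t2 where "\<tau>m < t2" "Z t2 = z1" "\<And>s. \<tau>m \<le> s \<and> s < t2 \<longrightarrow> Z s > z1" by auto
  then show ?thesis by blast
qed

definition "\<tau>2 = (SOME t2. \<tau>m < t2 \<and> Z t2 = z1 \<and> (\<forall>\<tau>. \<tau>m \<le> \<tau> \<and> \<tau> < t2 \<longrightarrow> Z \<tau> > z1))"

lemma \<tau>2: "\<tau>m < \<tau>2" "Z \<tau>2 = z1" "\<And>\<tau>. \<tau>m \<le> \<tau> \<Longrightarrow> \<tau> < \<tau>2 \<Longrightarrow> Z \<tau> > z1"
  using someI_ex[OF phaseC] unfolding \<tau>2_def[symmetric] by auto

lemma C_facts:
  assumes "\<tau>m \<le> \<tau>" "\<tau> \<le> \<tau>2"
  shows "Z \<tau> \<ge> z1" "Z \<tau> \<le> Zc" "W \<tau> \<le> 0"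
proof -
  have Hg: "\<And>\<tau>. \<tau>m \<le> \<tau> \<Longrightarrow> \<tau> \<le> \<tau>2 \<Longrightarrow> Z \<tau> \<ge> z1"
    using \<tau>2 by (metis less_eq_real_def)
  show "Z \<tau> \<ge> z1" using Hg assms by simp
  show "Z \<tau> \<le> Zc" using C_bounds(2)[OF _ Hg assms] \<tau>2 Zm_props(4) by simp
  have "W \<tau> \<le> - \<kappa> * (\<tau> - \<tau>m)" using C_bounds(1)[OF _ Hg assms] \<tau>2 by simp
  also have "\<dots> \<le> 0" using \<kappa>0 assms by simp
  finally show "W \<tau> \<le> 0" .
qed

lemma c0_pos: "c0 > 0" and c0_sq: "c0^2 = aa * va^2 / (4 * bb)"
proof -
  have "aa * va^2 / (4 * bb) > 0" using aa0 bb0 va0 by simp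
  then show "c0 > 0" "c0^2 = aa * va^2 / (4 * bb)" by (auto simp: c0_def)
qed

lemma energy1:
  assumes t: "\<tau>m \<le> \<tau>" and inner: "\<And>x. \<tau>m < x \<Longrightarrow> x < \<tau> \<Longrightarrow> 0 < Z x \<and> Z x \<le> Zc \<and> W x \<le> 0"
    and nn: "\<And>x. \<tau>m \<le> x \<Longrightarrow> x \<le> \<tau> \<Longrightarrow> 0 \<le> Z x" and zt: "Z \<tau> \<le> z1"
  shows "(W \<tau>)^2 \<ge> c0^2"
proof -
  have "\<Phi> aa \<tau> \<ge> \<Phi> aa \<tau>m"
  proof (rule energy_mono[OF less_imp_le[OF \<tau>m0] t])
    fix x assume x: "\<tau>m < x" "x < \<tau>"
    have "p (T x) + aa \<le> 0" using pb[of "T x"] by (simp add: aa_def)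
    then show "0 < Z x \<and> Z x \<le> Zc \<and> 0 \<le> W x * (p (T x) + aa)"
      using inner[OF x] by (simp add: mult_nonpos_nonpos)
  qed (use nn in auto)
  moreover have "\<Phi> aa \<tau> \<le> (W \<tau>)^2 / 2 + aa * z1 powr kk"
  proof -
    have z0: "Z \<tau> \<ge> 0" using nn t by simp
    then have "(Z \<tau>)^3 / (1 - \<alpha>) \<ge> 0" using a1 by simp
    moreover have "Z \<tau> powr kk \<le> z1 powr kk" using z0 zt kk3 by (intro powr_mono2) auto
    then have "aa * Z \<tau> powr kk \<le> aa * z1 powr kk" using aa0 by simp
    ultimately show ?thesis by (simp add: \<Phi>_def)
  qed
  ultimately have "(W \<tau>)^2 / 2 \<ge> aa * Z \<tau>m powr kk / 2 - aa * z1 powr kk" using Phi_m by simp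
  moreover have "aa * z1 powr kk \<le> aa * Z \<tau>m powr kk / 4" using Zm_props(3) aa0 by simp
  ultimately have "(W \<tau>)^2 \<ge> aa * Z \<tau>m powr kk / 2" by simp
  moreover have "aa * Z \<tau>m powr kk / 2 \<ge> aa * va^2 / (4 * bb)"
  proof -
    have "Z \<tau>m powr kk \<ge> va^2 / (2 * bb)" using energy2 bb0 by (simp add: field_simps)
    then have "aa * (va^2 / (2 * bb)) \<le> aa * Z \<tau>m powr kk" using aa0 by (intro mult_left_mono) auto
    then have "aa * Z \<tau>m powr kk / 2 \<ge> aa * (va^2 / (2 * bb)) / 2" by simp
    then show ?thesis by (simp add: field_simps)
  qed
  ultimately show ?thesis using c0_sq by simp
qed

lemma W\<tau>2: "W \<tau>2 \<le> - c0"
proof -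
  have sq: "(W \<tau>2)^2 \<ge> c0^2"
  proof (rule energy1)
    show "\<tau>m \<le> \<tau>2" using \<tau>2 by simp
    fix x assume "\<tau>m < x" "x < \<tau>2"
    then show "0 < Z x \<and> Z x \<le> Zc \<and> W x \<le> 0" using C_facts[of x] z1_ge1 by auto
  next
    fix x assume "\<tau>m \<le> x" "x \<le> \<tau>2"
    then show "0 \<le> Z x" using C_facts[of x] z1_ge1 by auto
  qed (use \<tau>2 in auto)
  have "W \<tau>2 \<le> 0" using C_facts[of \<tau>2] \<tau>2 by auto
  then have h2: "0 \<le> - W \<tau>2" by simp
  have h1: "c0^2 \<le> (- W \<tau>2)^2" using sq by simp
  have "c0 \<le> - W \<tau>2" by (rule power2_le_imp_le[OF h1 h2])
  then show ?thesis by simp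
qed

definition "g = (\<lambda>\<tau>. min (Z \<tau>) (- W \<tau> - c0 / 2))"

lemma phaseD: "\<exists>tb. \<tau>2 < tb \<and> g tb = 0 \<and> (\<forall>\<tau>. \<tau>2 \<le> \<tau> \<and> \<tau> < tb \<longrightarrow> g \<tau> > 0)"
proof -
  have t20: "\<tau>2 \<ge> 0" using \<tau>2 \<tau>m0 by simp
  have cg: "continuous_on {\<tau>2..b} g" for b
    unfolding g_def by (intro continuous_intros cZ'[OF t20] cW'[OF t20])
  have g2: "g \<tau>2 > 0" using W\<tau>2 \<tau>2 z1_ge1 c0_pos by (simp add: g_def)
  define D3 where "D3 = 2 * kk * z1 / c0 + 1"
  have D30: "D3 > 0" using kk3 z1_ge1 c0_pos by (simp add: D3_def add_pos_nonneg)
  have "\<exists>\<tau>. \<tau>2 \<le> \<tau> \<and> \<tau> \<le> \<tau>2 + D3 \<and> g \<tau> \<le> 0"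
  proof (rule ccontr)
    assume "\<not> ?thesis"
    then have H: "\<And>\<tau>. \<tau>2 \<le> \<tau> \<Longrightarrow> \<tau> \<le> \<tau>2 + D3 \<Longrightarrow> g \<tau> > 0" by (meson not_le)
    have "Z (\<tau>2 + D3) - Z \<tau>2 \<le> (- c0 / (2 * kk)) * ((\<tau>2 + D3) - \<tau>2)"
    proof (rule deriv_upper[OF _ cZ'[OF t20] dZ])
      show "\<tau>2 \<le> \<tau>2 + D3" using D30 by simp
      fix x assume x: "\<tau>2 < x" "x < \<tau>2 + D3"
      have "W x < - c0 / 2" using H[of x] x by (simp add: g_def)
      then show "W x / kk \<le> - c0 / (2 * kk)" using kk3 by (simp add: field_simps)
    qed (use t20 in auto)
    moreover have "(- c0 / (2 * kk)) * ((\<tau>2 + D3) - \<tau>2) = - z1 - c0 / (2 * kk)"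
      using c0_pos kk3 by (simp add: D3_def field_simps)
    moreover have "Z (\<tau>2 + D3) > 0" using H[of "\<tau>2 + D3"] D30 by (simp add: g_def)
    ultimately show False using \<tau>2 c0_pos kk3 by (smt (verit) divide_pos_pos)
  qed
  then obtain \<tau>' where t': "\<tau>2 \<le> \<tau>'" "\<tau>' \<le> \<tau>2 + D3" "g \<tau>' \<le> 0" by blast
  from first_hit_down[OF t'(1) cg g2 t'(3)]
  obtain tb where "\<tau>2 < tb" "g tb = 0" "\<And>s. \<tau>2 \<le> s \<and> s < tb \<longrightarrow> g s > 0" by auto
  then show ?thesis by blast
qed

definition "\<tau>b = (SOME tb. \<tau>2 < tb \<and> g tb = 0 \<and> (\<forall>\<tau>. \<tau>2 \<le> \<tau> \<and> \<tau> < tb \<longrightarrow> g \<tau> > 0))"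

lemma \<tau>b: "\<tau>2 < \<tau>b" "g \<tau>b = 0" "\<And>\<tau>. \<tau>2 \<le> \<tau> \<Longrightarrow> \<tau> < \<tau>b \<Longrightarrow> g \<tau> > 0"
  using someI_ex[OF phaseD] unfolding \<tau>b_def[symmetric] by auto

lemma D_pos: "\<tau>2 \<le> \<tau> \<Longrightarrow> \<tau> < \<tau>b \<Longrightarrow> Z \<tau> > 0 \<and> W \<tau> < - c0 / 2"
proof -
  assume "\<tau>2 \<le> \<tau>" "\<tau> < \<tau>b"
  then have "0 < min (Z \<tau>) (- W \<tau> - c0 / 2)" using \<tau>b(3) unfolding g_def by blast
  then have "0 < Z \<tau>" "0 < - W \<tau> - c0 / 2" by auto
  then show ?thesis by linarith
qed

lemma D_le: assumes "\<tau>2 \<le> \<tau>" "\<tau> \<le> \<tau>b" shows "Z \<tau> \<le> z1"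
proof -
  have "Z \<tau> - Z \<tau>2 \<le> 0 * (\<tau> - \<tau>2)"
  proof (rule deriv_upper[OF assms(1) cZ' dZ])
    fix x assume x: "\<tau>2 < x" "x < \<tau>"
    have "W x < 0" using D_pos[of x] x assms c0_pos by auto
    then show "W x / kk \<le> 0" using kk3 by (simp add: divide_nonpos_pos)
  qed (use \<tau>2 \<tau>m0 in auto)
  then show ?thesis using \<tau>2 by simp
qed

lemma final_D: "Z \<tau>b = 0" "W \<tau>b \<le> - c0"
proof -
  have gb: "Z \<tau>b \<ge> 0" "- W \<tau>b - c0 / 2 \<ge> 0" using \<tau>b(2) by (auto simp: g_def min_def split: if_splits)
  have sq: "(W \<tau>b)^2 \<ge> c0^2"
  proof (rule energy1)
    show "\<tau>m \<le> \<tau>b" using \<tau>2 \<tau>b by simp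
    fix x assume x: "\<tau>m < x" "x < \<tau>b"
    show "0 < Z x \<and> Z x \<le> Zc \<and> W x \<le> 0"
    proof (cases "x \<le> \<tau>2")
      case True then show ?thesis using C_facts[of x] x z1_ge1 by auto
    next
      case False then show ?thesis using D_pos[of x] D_le[of x] x Zc_z1 c0_pos by auto
    qed
  next
    fix x assume x: "\<tau>m \<le> x" "x \<le> \<tau>b"
    show "0 \<le> Z x"
    proof (cases "x \<le> \<tau>2")
      case True then show ?thesis using C_facts[of x] x z1_ge1 by auto
    next
      case False then show ?thesis using D_pos[of x] gb x by (cases "x = \<tau>b") auto
    qed
  next
    show "Z \<tau>b \<le> z1" using D_le[of \<tau>b] \<tau>b by simp
  qed
  have "W \<tau>b \<le> 0" using gb c0_pos by simp
  then have h2: "0 \<le> - W \<tau>b" by simp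
  have h1: "c0^2 \<le> (- W \<tau>b)^2" using sq by simp
  have "c0 \<le> - W \<tau>b" by (rule power2_le_imp_le[OF h1 h2])
  then show W: "W \<tau>b \<le> - c0" by simp
  then have "- W \<tau>b - c0 / 2 > 0" using c0_pos by simp
  then show "Z \<tau>b = 0" using \<tau>b(2) gb by (auto simp: g_def min_def split: if_splits)
qed

lemma flight_core: "0 < \<tau>b \<and> (\<forall>\<tau>. 0 < \<tau> \<and> \<tau> < \<tau>b \<longrightarrow> 0 < Z \<tau> \<and> Z \<tau> \<le> Zc) \<and> Z \<tau>b = 0 \<and> W \<tau>b \<le> - c0"
proof (intro conjI allI impI)
  show "0 < \<tau>b" using \<tau>b \<tau>2 \<tau>m0 by simp
  fix \<tau> assume t: "0 < \<tau> \<and> \<tau> < \<tau>b"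
  have "0 < Z \<tau> \<and> Z \<tau> \<le> Zc"
  proof (cases "\<tau> \<le> \<tau>1")
    case True then show ?thesis using Z_pos_A[of \<tau>] A_facts[of \<tau>] t Zc_z1 by auto
  next
    case F1: False
    show ?thesis
    proof (cases "\<tau> \<le> \<tau>m")
      case True then show ?thesis using B_facts[of \<tau>] F1 z1_ge1 by auto
    next
      case F2: False
      show ?thesis
      proof (cases "\<tau> \<le> \<tau>2")
        case True then show ?thesis using C_facts[of \<tau>] F2 z1_ge1 by auto
      next
        case False then show ?thesis using D_pos[of \<tau>] D_le[of \<tau>] t Zc_z1 by auto
      qed
    qed
  qed
  then show "0 < Z \<tau>" "Z \<tau> \<le> Zc" by auto
qed (use final_D in auto)

end

lemma sq_from_sqrt: "0 \<le> (A::real) \<Longrightarrow> sqrt A \<le> v \<Longrightarrow> A \<le> v^2"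
proof -
  assume A: "0 \<le> A" "sqrt A \<le> v"
  have "(sqrt A)^2 \<le> v^2" using A by (intro power_mono) auto
  then show ?thesis using A by simp
qed

lemma flight_lemma:
  fixes \<alpha> p1 p2 :: real and p :: "real \<Rightarrow> real"
  assumes a0: "0 < \<alpha>" and a1: "\<alpha> < 1" and p21: "p2 \<le> p1" and p10: "p1 < 0"
    and pb: "\<And>t. p2 \<le> p t \<and> p t \<le> p1"
    and Lp0: "0 \<le> Lp" and plip: "\<And>s t. \<bar>p s - p t\<bar> \<le> Lp * \<bar>s - t\<bar>"
  shows "\<exists>V>0. \<forall>ta va. va > V \<longrightarrow> (\<exists>tb u du w. ta < tb \<and> continuous_on {ta..tb} u \<and>
      u ta = 0 \<and> u tb = 0 \<and> solves_on \<alpha> p u du ta tb \<and> (du \<longlongrightarrow> va) (at_right ta) \<and> w > M \<and>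
      (du \<longlongrightarrow> - w) (at_left tb))"
proof -
  define A0 where "A0 = 4 * (3 / (1 - \<alpha>)) * (- p2) * (max 1 ((2 / (- p1)) powr (1 / (3 / (1 - \<alpha>) - 3)))) powr (3 / (1 - \<alpha>))"
  define S0 where "S0 = 2 * (- p2) * (max (4 * max 1 ((2 / (- p1)) powr (1 / (3 / (1 - \<alpha>) - 3))))
                 ((2 / ((- p1) * (1 - \<alpha>))) powr (1 / (3 / (1 - \<alpha>) - 3)))) powr (3 / (1 - \<alpha>))"
  define M0 where "M0 = max M 0"
  define V where "V = 1 + sqrt A0 + sqrt S0 + 2 * M0 * sqrt ((- p2) / (- p1))"
  have A00: "A0 \<ge> 0" unfolding A0_def using a1 p10 p21 by (intro mult_nonneg_nonneg) auto
  have S00: "S0 \<ge> 0" unfolding S0_def using p10 p21 by (intro mult_nonneg_nonneg) auto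
  have M00: "M0 \<ge> 0" by (simp add: M0_def)
  have q0: "(- p2) / (- p1) \<ge> 0" using p10 p21 by (intro divide_nonneg_nonneg) auto
  have V0: "V > 0" using A00 S00 M00 q0 by (simp add: V_def add_pos_nonneg)
  show ?thesis
  proof (rule exI[of _ V], intro conjI allI impI V0)
    fix ta va :: real assume vaV: "va > V"
    have va0: "va > 0" using vaV V0 by simp
    have nn: "sqrt A0 \<ge> 0" "sqrt S0 \<ge> 0" "2 * M0 * sqrt ((- p2) / (- p1)) \<ge> 0"
      using A00 S00 M00 q0 by auto
    have vaA: "A0 \<le> va^2"
      by (rule sq_from_sqrt[OF A00]) (use vaV nn in \<open>unfold V_def, linarith\<close>)
    have vaS: "S0 \<le> va^2"
      by (rule sq_from_sqrt[OF S00]) (use vaV nn in \<open>unfold V_def, linarith\<close>)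
    interpret F: fl \<alpha> p1 p2 p Lp ta va
      by unfold_locales (use a0 a1 p21 p10 pb Lp0 plip va0 vaA vaS in \<open>auto simp: A0_def S0_def\<close>)
    have core: "0 < F.\<tau>b" "\<And>\<tau>. 0 < \<tau> \<Longrightarrow> \<tau> < F.\<tau>b \<Longrightarrow> 0 < F.Z \<tau> \<and> F.Z \<tau> \<le> F.Zc"
      "F.Z F.\<tau>b = 0" "F.W F.\<tau>b \<le> - F.c0"
      using F.flight_core by auto
    have cl: "clp F.Zc (F.Z \<tau>) = F.Z \<tau>" if "0 < \<tau>" "\<tau> < F.\<tau>b" for \<tau>
      using core(2)[OF that] by (simp add: clp_def)
    have "\<exists>tb u du. F.T 0 < tb \<and> continuous_on {F.T 0..tb} u \<and> u (F.T 0) = 0 \<and> u tb = 0 \<and>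
           solves_on \<alpha> p u du (F.T 0) tb \<and> (du \<longlongrightarrow> F.W 0) (at_right (F.T 0)) \<and>
           (du \<longlongrightarrow> F.W F.\<tau>b) (at_left tb)"
    proof (rule convert_flight[OF a0 a1 F.kk1a core(1) F.cT F.cZ F.cW])
      fix \<tau> assume t: "0 < \<tau>" "\<tau> < F.\<tau>b"
      show "(F.T has_real_derivative F.Z \<tau> powr (F.kk - 1)) (at \<tau>)"
        using F.dT[OF t(1)] cl[OF t] by (simp add: F.ee_def)
      show "(F.Z has_real_derivative F.W \<tau> / F.kk) (at \<tau>)" using F.dZ[OF t(1)] .
      show "(F.W has_real_derivative F.Z \<tau> powr (F.kk - 1) * p (F.T \<tau>) + (F.Z \<tau>)^2) (at \<tau>)"
        using F.dW[OF t(1)] cl[OF t] by (simp add: F.ee_def F.Wd_def)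
      show "F.Z \<tau> > 0" using core(2)[OF t] by simp
    qed (use F.init core in auto)
    then obtain tb u du where R: "ta < tb" "continuous_on {ta..tb} u" "u ta = 0" "u tb = 0"
      "solves_on \<alpha> p u du ta tb" "(du \<longlongrightarrow> va) (at_right ta)" "(du \<longlongrightarrow> F.W F.\<tau>b) (at_left tb)"
      using F.init by auto
    have "F.c0 > M0"
    proof -
      have "2 * M0 * sqrt ((- p2) / (- p1)) < va" using vaV nn unfolding V_def by linarith
      then have "(2 * M0 * sqrt ((- p2) / (- p1)))^2 < va^2"
        using nn(3) by (intro power_strict_mono) auto
      then have "((- p2) / (- p1)) * (4 * M0^2) < va^2" using q0 by (simp add: power_mult_distrib algebra_simps)
      then have "M0^2 < F.aa * va^2 / (4 * F.bb)"
        using p10 p21 by (simp add: F.aa_def F.bb_def field_simps)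
      then have "sqrt (M0^2) < sqrt (F.aa * va^2 / (4 * F.bb))" by (rule real_sqrt_less_mono)
      then show ?thesis using M00 by (simp add: F.c0_def)
    qed
    then have wM: "- F.W F.\<tau>b > M" using core(4) by (simp add: M0_def)
    show "\<exists>tb u du w. ta < tb \<and> continuous_on {ta..tb} u \<and>
      u ta = 0 \<and> u tb = 0 \<and> solves_on \<alpha> p u du ta tb \<and> (du \<longlongrightarrow> va) (at_right ta) \<and> w > M \<and>
      (du \<longlongrightarrow> - w) (at_left tb)"
      using R wM by (intro exI[of _ tb] exI[of _ u] exI[of _ du] exI[of _ "- F.W F.\<tau>b"]) auto
  qed
qed

theorem lemma3p4:
  fixes \<alpha> p1 p2 :: real and p :: "real \<Rightarrow> real"
  assumes "0 < \<alpha>" "\<alpha> < 1"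
    and "\<exists>L. L-lipschitz_on UNIV p"
    and "p2 \<le> p1" "p1 < 0"
    and "\<And>t. p2 \<le> p t \<and> p t \<le> p1"
  shows "\<forall>n::nat. \<exists>\<gamma>>0. \<forall>t0 v0. v0 > \<gamma> \<longrightarrow>
           (\<exists>u du t. bounces_n_times \<alpha> p1 p2 p t0 v0 n u du t)"
proof
  fix n :: nat
  obtain L where L: "L-lipschitz_on UNIV p" using assms(3) by blast
  have L0: "0 \<le> L" using L by (rule lipschitz_on_nonneg)
  have plip: "\<bar>p s - p t\<bar> \<le> L * \<bar>s - t\<bar>" for s t
    using lipschitz_onD[OF L, of s t] by (simp add: dist_real_def)
  show "\<exists>\<gamma>>0. \<forall>t0 v0. v0 > \<gamma> \<longrightarrow> (\<exists>u du t. bounces_n_times \<alpha> p1 p2 p t0 v0 n u du t)"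
    by (rule glue) (rule flight_lemma[OF assms(1,2,4,5,6) L0 plip])
qed

end
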